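(* Let $p,q\ge 1$ and let $P(p,q)$ be the parallelogram hexagonal system with $p$ rows of $q$ hexagons each, so it has $n=pq$ hexagons. Then $cf(P(p,q))=pq+1=n+1$.
   Context: A hexagonal system (HS) is a finite 2-connected plane graph in which every interior face is a regular hexagon of the hexagonal lattice; it is drawn with some edges vertical, so that hexagons form horizontal rows in which consecutive hexagons share a vertical edge. $P(p,q)$ consists of $p$ horizontal rows, each a linear chain of $q$ hexagons, where each row lies directly above the previous one shifted half a hexagon to the right (so hexagon $j$ of row $i+1$ shares edges with hexagons $j$ and $j+1$ of row $i$ when they exist); it is a parallelogram (rhombus-shaped) benzenoid. In particular $P(1,q)$ is the linear hexagonal chain of $q$ hexagons. For a perfect matching $M$, a forcing set of $M$ is a subset of $M$ contained in no other perfect matching; a complete forcing set of $G$ is a set $S\subseteq E(G)$ with $S\cap M$ a forcing set of $M$ for every perfect matching $M$; $cf(G)$ is the minimum size of a complete forcing set. *)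

theory Defs
  imports Main
begin

text \<open>Hexagonal lattice realised as the brick-wall lattice on int \<times> int:
  horizontal edges (x,y)-(x+1,y), vertical edges (x,y)-(x,y+1) when x+y is even.
  The hexagon with lower-left corner (a,b) (a+b even) has vertices
  (a,b),(a+1,b),(a+2,b),(a,b+1),(a+1,b+1),(a+2,b+1); its two vertical edges
  are the ones shared with its horizontal neighbours in the same row.\<close>

type_synonym vtx = "int \<times> int"

definition hex_edges :: "int \<Rightarrow> int \<Rightarrow> vtx set set" where
  "hex_edges a b =
     {{(a,b),(a+1,b)}, {(a+1,b),(a+2,b)},
      {(a,b+1),(a+1,b+1)}, {(a+1,b+1),(a+2,b+1)},
      {(a,b),(a,b+1)}, {(a+2,b),(a+2,b+1)}}"

text \<open>P(p,q): row i (i < p) consists of q hexagons; hexagon j of row i has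
  lower-left corner (2j+i, i), so row i+1 is shifted half a hexagon right.\<close>

definition para_edges :: "nat \<Rightarrow> nat \<Rightarrow> vtx set set" where
  "para_edges p q = (\<Union>i<p. \<Union>j<q. hex_edges (int (2*j + i)) (int i))"

definition para_verts :: "nat \<Rightarrow> nat \<Rightarrow> vtx set" where
  "para_verts p q = \<Union> (para_edges p q)"

definition perfect_matching :: "'v set \<Rightarrow> 'v set set \<Rightarrow> 'v set set \<Rightarrow> bool" where
  "perfect_matching V E M \<longleftrightarrow> M \<subseteq> E \<and> (\<forall>v\<in>V. \<exists>!e. e \<in> M \<and> v \<in> e)"

definition forcing_set :: "'v set \<Rightarrow> 'v set set \<Rightarrow> 'v set set \<Rightarrow> 'v set set \<Rightarrow> bool" where
  "forcing_set V E M S \<longleftrightarrow> S \<subseteq> M \<and>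
     (\<forall>M'. perfect_matching V E M' \<and> S \<subseteq> M' \<longrightarrow> M' = M)"

definition complete_forcing_set :: "'v set \<Rightarrow> 'v set set \<Rightarrow> 'v set set \<Rightarrow> bool" where
  "complete_forcing_set V E S \<longleftrightarrow> S \<subseteq> E \<and>
     (\<forall>M. perfect_matching V E M \<longrightarrow> forcing_set V E M (S \<inter> M))"

definition cf :: "'v set \<Rightarrow> 'v set set \<Rightarrow> nat" where
  "cf V E = (LEAST k. \<exists>S. complete_forcing_set V E S \<and> finite S \<and> card S = k)"

end

theory Submission
  imports Defs
begin


definition hE :: "int \<Rightarrow> int \<Rightarrow> vtx set" where
  "hE y r = {(y - 1 + r, y), (y + r, y)}"
definition vE :: "int \<Rightarrow> int \<Rightarrow> vtx set" where
  "vE i k = {(i + 2*k, i), (i + 2*k, i + 1)}"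
definition hrange :: "int \<Rightarrow> int \<Rightarrow> int \<Rightarrow> int \<Rightarrow> bool" where
  "hrange P Q y r \<longleftrightarrow> (0 \<le> y \<and> y < P \<and> 1 \<le> r \<and> r \<le> 2*Q) \<or> (1 \<le> y \<and> y \<le> P \<and> 0 \<le> r \<and> r \<le> 2*Q - 1)"
definition vrange :: "int \<Rightarrow> int \<Rightarrow> int \<Rightarrow> int \<Rightarrow> bool" where
  "vrange P Q y r \<longleftrightarrow> (0 \<le> y \<and> y < P \<and> 1 \<le> r \<and> r \<le> 2*Q+1) \<or> (1 \<le> y \<and> y \<le> P \<and> 0 \<le> r \<and> r \<le> 2*Q)"

lemma hE_eq_iff[simp]: "hE y r = hE y' r' \<longleftrightarrow> y = y' \<and> r = r'"
  unfolding hE_def by (auto simp: doubleton_eq_iff)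
lemma vE_eq_iff[simp]: "vE i k = vE i' k' \<longleftrightarrow> i = i' \<and> k = k'"
  unfolding vE_def by (auto simp: doubleton_eq_iff)
lemma hE_vE_neq[simp]: "hE y r \<noteq> vE i k" "vE i k \<noteq> hE y r"
  unfolding vE_def hE_def by (auto simp: doubleton_eq_iff)

lemma mem_hE: "(x, z) \<in> hE y r \<longleftrightarrow> z = y \<and> (r = x - y + 1 \<or> r = x - y)"
  unfolding hE_def by auto
lemma mem_vE: "(x, z) \<in> vE i k \<longleftrightarrow> (z = i \<or> z = i + 1) \<and> x = i + 2*k"
  unfolding vE_def by auto

lemma hex_h1: "hE b (2*j+1) \<in> hex_edges (2*j+b) b" unfolding hex_edges_def hE_def by (simp add: algebra_simps)
lemma hex_h2: "hE b (2*j+2) \<in> hex_edges (2*j+b) b" unfolding hex_edges_def hE_def by (simp add: algebra_simps)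
lemma hex_h3: "hE (b+1) (2*j) \<in> hex_edges (2*j+b) b" unfolding hex_edges_def hE_def by (simp add: algebra_simps)
lemma hex_h4: "hE (b+1) (2*j+1) \<in> hex_edges (2*j+b) b" unfolding hex_edges_def hE_def by (simp add: algebra_simps)
lemma hex_v1: "vE b j \<in> hex_edges (2*j+b) b" unfolding hex_edges_def vE_def by (simp add: algebra_simps)
lemma hex_v2: "vE b (j+1) \<in> hex_edges (2*j+b) b" unfolding hex_edges_def vE_def by (simp add: algebra_simps)
lemma para_mem:
  assumes "0 \<le> i" "i < int p" "0 \<le> j" "j < int q" "e \<in> hex_edges (2*j+i) i"
  shows "e \<in> para_edges p q"
proof -
  have "nat i < p" "nat j < q" using assms by linarith+
  moreover have "int (2 * nat j + nat i) = 2*j+i" "int (nat i) = i" using assms by auto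
  ultimately show ?thesis using assms(5) unfolding para_edges_def by force
qed

lemma E_char:
  fixes p q :: nat
  assumes "1 \<le> q"
  shows "e \<in> para_edges p q \<longleftrightarrow>
    (\<exists>y r. e = hE y r \<and> hrange (int p) (int q) y r) \<or>
    (\<exists>i k. e = vE i k \<and> 0 \<le> i \<and> i < int p \<and> 0 \<le> k \<and> k \<le> int q)"
proof
  assume "e \<in> para_edges p q"
  then obtain i j where ij: "i < p" "j < q" "e \<in> hex_edges (int (2*j+i)) (int i)"
    unfolding para_edges_def by blast
  have h1: "{(int (2*j+i), int i), (int (2*j+i) + 1, int i)} = hE (int i) (2 * int j + 1)"
    unfolding hE_def by auto
  have h2: "{(int (2*j+i) + 1, int i), (int (2*j+i) + 2, int i)} = hE (int i) (2 * int j + 2)"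
    unfolding hE_def by auto
  have h3: "{(int (2*j+i), int i + 1), (int (2*j+i) + 1, int i + 1)} = hE (int i + 1) (2 * int j)"
    unfolding hE_def by auto
  have h4: "{(int (2*j+i) + 1, int i + 1), (int (2*j+i) + 2, int i + 1)} = hE (int i + 1) (2 * int j + 1)"
    unfolding hE_def by auto
  have h5: "{(int (2*j+i), int i), (int (2*j+i), int i + 1)} = vE (int i) (int j)"
    unfolding vE_def by auto
  have h6: "{(int (2*j+i) + 2, int i), (int (2*j+i) + 2, int i + 1)} = vE (int i) (int j + 1)"
    unfolding vE_def by auto
  from ij(3) have "e \<in> {hE (int i) (2 * int j + 1), hE (int i) (2 * int j + 2), hE (int i + 1) (2 * int j),
      hE (int i + 1) (2 * int j + 1), vE (int i) (int j), vE (int i) (int j + 1)}"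
    unfolding hex_edges_def h1[symmetric] h2[symmetric] h3[symmetric] h4[symmetric] h5[symmetric] h6[symmetric]
    by simp
  then show "(\<exists>y r. e = hE y r \<and> hrange (int p) (int q) y r) \<or>
    (\<exists>i k. e = vE i k \<and> 0 \<le> i \<and> i < int p \<and> 0 \<le> k \<and> k \<le> int q)"
    using ij(1,2) unfolding hrange_def by (elim insertE; force)
next
  assume "(\<exists>y r. e = hE y r \<and> hrange (int p) (int q) y r) \<or>
    (\<exists>i k. e = vE i k \<and> 0 \<le> i \<and> i < int p \<and> 0 \<le> k \<and> k \<le> int q)"
  then show "e \<in> para_edges p q"
  proof (elim disjE exE conjE)
    fix y r assume e: "e = hE y r" and hr: "hrange (int p) (int q) y r"
    from hr consider (a) "0 \<le> y" "y < int p" "1 \<le> r" "r \<le> 2 * int q"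
      | (b) "1 \<le> y" "y \<le> int p" "0 \<le> r" "r \<le> 2 * int q - 1"
      unfolding hrange_def by blast
    then show ?thesis
    proof cases
      case a
      show ?thesis
      proof (cases "even r")
        case True
        then obtain m where "r = 2*m" by (auto elim: evenE)
        then have m: "r = 2*(m - 1) + 2" by simp
        show ?thesis using para_mem[where i=y and j="m - 1" and e=e] hex_h2[of y "m - 1"] a m e by (simp; linarith)
      next
        case False
        then obtain j where m: "r = 2*j + 1" by (metis oddE)
        show ?thesis using para_mem[where i=y and j=j and e=e] hex_h1[of y j] a m e by (simp; linarith)
      qed
    next
      case b
      show ?thesis
      proof (cases "even r")
        case True
        then obtain j where m: "r = 2*j" by (auto elim: evenE)
        show ?thesis using para_mem[where i="y - 1" and j=j and e=e] hex_h3[of "y - 1" j] b m e by (simp; linarith)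
      next
        case False
        then obtain j where m: "r = 2*j + 1" by (metis oddE)
        show ?thesis using para_mem[where i="y - 1" and j=j and e=e] hex_h4[of "y - 1" j] b m e by (simp; linarith)
      qed
    qed
  next
    fix i k assume e: "e = vE i k" and r: "0 \<le> i" "i < int p" "0 \<le> k" "k \<le> int q"
    show ?thesis
    proof (cases "k < int q")
      case True
      show ?thesis using para_mem[where i=i and j=k and e=e] hex_v1[of i k] r True e by (simp; linarith)
    next
      case False
      show ?thesis using para_mem[where i=i and j="k - 1" and e=e] hex_v2[of i "k - 1"] r False e assms by (simp; linarith)
    qed
  qed
qed



definition ex1 :: "bool \<Rightarrow> bool \<Rightarrow> bool \<Rightarrow> bool" where
  "ex1 a b c \<longleftrightarrow> (a \<and> \<not> b \<and> \<not> c) \<or> (\<not> a \<and> b \<and> \<not> c) \<or> (\<not> a \<and> \<not> b \<and> c)"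

definition hp :: "int \<Rightarrow> int \<Rightarrow> int \<Rightarrow> bool" where
  "hp a b r \<longleftrightarrow> (\<exists>m. r = 2*m+1 \<and> a \<le> m \<and> m < b) \<or> (\<exists>m. r = 2*m \<and> (m < a \<or> b < m))"

definition Mc :: "nat \<Rightarrow> nat \<Rightarrow> (int \<Rightarrow> int) \<Rightarrow> vtx set set" where
  "Mc p q C = {hE y r | y r. hrange (int p) (int q) y r \<and> hp (C (y-1)) (C y) r}
      \<union> {vE i (C i) | i. 0 \<le> i \<and> i < int p}"

definition validC :: "nat \<Rightarrow> nat \<Rightarrow> (int \<Rightarrow> int) \<Rightarrow> bool" where
  "validC p q C \<longleftrightarrow> (\<forall>i. i < 0 \<longrightarrow> C i = 0) \<and> (\<forall>i. int p \<le> i \<longrightarrow> C i = int q) \<and>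
     (\<forall>i j. i \<le> j \<longrightarrow> C i \<le> C j)"

definition ext :: "vtx set set \<Rightarrow> int \<Rightarrow> int \<Rightarrow> bool" where
  "ext M y r \<longleftrightarrow> (\<exists>k. r = 2*k+1 \<and> vE y k \<in> M) \<or> (\<exists>k. r = 2*k \<and> vE (y-1) k \<in> M)"

lemma hE_in_Mc: "hE y r \<in> Mc p q C \<longleftrightarrow> hrange (int p) (int q) y r \<and> hp (C (y-1)) (C y) r"
  unfolding Mc_def by auto
lemma vE_in_Mc: "vE i k \<in> Mc p q C \<longleftrightarrow> 0 \<le> i \<and> i < int p \<and> k = C i"
  unfolding Mc_def by auto

lemma validC_bounds:
  assumes "validC p q C" shows "0 \<le> C i" "C i \<le> int q" "i \<le> j \<Longrightarrow> C i \<le> C j"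
proof -
  have m: "\<And>i j. i \<le> j \<Longrightarrow> C i \<le> C j" and a: "C (-1) = 0" and b: "C (int p) = int q"
    using assms unfolding validC_def by auto
  show "0 \<le> C i" using m[of "-1" i] a assms unfolding validC_def by (cases "i < 0") auto
  show "C i \<le> int q" using m[of i "int p"] b m[of "int p" i] assms unfolding validC_def
    by (cases "i \<le> int p") auto
  show "i \<le> j \<Longrightarrow> C i \<le> C j" by (rule m)
qed

context
  fixes p q :: nat
  assumes p1: "1 \<le> p" and q1: "1 \<le> q"
begin

lemma V_char: "(x, y) \<in> para_verts p q \<longleftrightarrow> vrange (int p) (int q) y (x - y + 1)"
proof
  assume "(x, y) \<in> para_verts p q"
  then obtain e where e: "e \<in> para_edges p q" "(x, y) \<in> e" unfolding para_verts_def by blast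
  from e(1)[unfolded E_char[OF q1]] show "vrange (int p) (int q) y (x - y + 1)"
  proof (elim disjE exE conjE)
    fix y' r assume "e = hE y' r" "hrange (int p) (int q) y' r"
    then show ?thesis using e(2) by (auto simp: mem_hE hrange_def vrange_def)
  next
    fix i k assume "e = vE i k" "0 \<le> i" "i < int p" "0 \<le> k" "k \<le> int q"
    then show ?thesis using e(2) by (auto simp: mem_vE vrange_def)
  qed
next
  assume v: "vrange (int p) (int q) y (x - y + 1)"
  have ex: "\<And>e. e \<in> para_edges p q \<Longrightarrow> (x, y) \<in> e \<Longrightarrow> (x, y) \<in> para_verts p q"
    unfolding para_verts_def by blast
  from v consider (a) "0 \<le> y" "y < int p" "1 \<le> x - y + 1" "x - y + 1 \<le> 2 * int q + 1"
    | (b) "1 \<le> y" "y \<le> int p" "0 \<le> x - y + 1" "x - y + 1 \<le> 2 * int q"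
    unfolding vrange_def by blast
  then show "(x, y) \<in> para_verts p q"
  proof cases
    case a
    show ?thesis
    proof (cases "x - y + 1 \<le> 2 * int q")
      case True
      have "hE y (x - y + 1) \<in> para_edges p q" unfolding E_char[OF q1] hrange_def using a True by blast
      moreover have "(x, y) \<in> hE y (x - y + 1)" unfolding mem_hE by simp
      ultimately show ?thesis by (rule ex)
    next
      case False
      have "hE y (x - y) \<in> para_edges p q" unfolding E_char[OF q1] hrange_def using a False q1 by auto
      moreover have "(x, y) \<in> hE y (x - y)" unfolding mem_hE by simp
      ultimately show ?thesis by (rule ex)
    qed
  next
    case b
    show ?thesis
    proof (cases "x - y + 1 \<le> 2 * int q - 1")
      case True
      have "hE y (x - y + 1) \<in> para_edges p q" unfolding E_char[OF q1] hrange_def using b True by blast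
      moreover have "(x, y) \<in> hE y (x - y + 1)" unfolding mem_hE by simp
      ultimately show ?thesis by (rule ex)
    next
      case False
      have "hE y (x - y) \<in> para_edges p q" unfolding E_char[OF q1] hrange_def using b False q1 by auto
      moreover have "(x, y) \<in> hE y (x - y)" unfolding mem_hE by simp
      ultimately show ?thesis by (rule ex)
    qed
  qed
qed

lemma V_char': "(y - 1 + r, y) \<in> para_verts p q \<longleftrightarrow> vrange (int p) (int q) y r"
  using V_char[of "y - 1 + r" y] by simp

lemma v_in_hE: "(y - 1 + r, y) \<in> hE y' r' \<longleftrightarrow> y' = y \<and> (r' = r \<or> r' = r - 1)"
  unfolding mem_hE by auto
lemma v_in_vE: "(y - 1 + r, y) \<in> vE i k \<longleftrightarrow> (i = y \<and> r = 2*k+1) \<or> (i = y - 1 \<and> r = 2*k)"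
  unfolding mem_vE by auto

lemma v_in_e:
  assumes "e \<in> para_edges p q"
  shows "(y - 1 + r, y) \<in> e \<longleftrightarrow> e = hE y (r-1) \<or> e = hE y r \<or>
     (\<exists>k. r = 2*k+1 \<and> e = vE y k) \<or> (\<exists>k. r = 2*k \<and> e = vE (y-1) k)"
proof
  assume v: "(y - 1 + r, y) \<in> e"
  from assms[unfolded E_char[OF q1]] show "e = hE y (r-1) \<or> e = hE y r \<or>
     (\<exists>k. r = 2*k+1 \<and> e = vE y k) \<or> (\<exists>k. r = 2*k \<and> e = vE (y-1) k)"
  proof (elim disjE exE conjE)
    fix y' r' assume "e = hE y' r'" then show ?thesis using v by (auto simp: v_in_hE)
  next
    fix i k assume "e = vE i k" then show ?thesis using v by (auto simp: v_in_vE)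
  qed
next
  assume "e = hE y (r-1) \<or> e = hE y r \<or>
     (\<exists>k. r = 2*k+1 \<and> e = vE y k) \<or> (\<exists>k. r = 2*k \<and> e = vE (y-1) k)"
  then show "(y - 1 + r, y) \<in> e" by (auto simp: mem_vE mem_hE)
qed

lemma PM_vertex:
  assumes pm: "perfect_matching (para_verts p q) (para_edges p q) M" and vr: "vrange (int p) (int q) y r"
  shows "ex1 (hE y (r-1) \<in> M) (hE y r \<in> M) (ext M y r)"
proof -
  have sub: "M \<subseteq> para_edges p q" using pm unfolding perfect_matching_def by blast
  have "(y - 1 + r, y) \<in> para_verts p q" using vr V_char' by blast
  then obtain e0 where e0: "e0 \<in> M" "(y - 1 + r, y) \<in> e0"
    and uniq: "\<And>e. e \<in> M \<Longrightarrow> (y - 1 + r, y) \<in> e \<Longrightarrow> e = e0"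
    using pm unfolding perfect_matching_def by metis
  have cand: "e0 = hE y (r-1) \<or> e0 = hE y r \<or>
     (\<exists>k. r = 2*k+1 \<and> e0 = vE y k) \<or> (\<exists>k. r = 2*k \<and> e0 = vE (y-1) k)"
    using v_in_e[of e0 y r] e0 sub by blast
  have u1: "hE y (r-1) \<in> M \<Longrightarrow> e0 = hE y (r-1)" using uniq v_in_hE by auto
  have u2: "hE y r \<in> M \<Longrightarrow> e0 = hE y r" using uniq v_in_hE by auto
  have u3: "ext M y r \<Longrightarrow> (\<exists>k. e0 = vE y k) \<or> (\<exists>k. e0 = vE (y-1) k)"
    unfolding ext_def using uniq v_in_vE by metis
  have l: "hE y (r-1) \<in> M \<or> hE y r \<in> M \<or> ext M y r"
    using cand e0(1) unfolding ext_def by auto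
  show ?thesis unfolding ex1_def using l u1 u2 u3 by auto
qed

end


lemma arith_ex1:
  fixes y r a b P Q :: int
  assumes "1 \<le> P" "1 \<le> Q" "vrange P Q y r" "0 \<le> a" "a \<le> b" "b \<le> Q"
    "y \<le> 0 \<longrightarrow> a = 0" "P \<le> y \<longrightarrow> b = Q"
  shows "ex1 (hrange P Q y (r-1) \<and> hp a b (r-1)) (hrange P Q y r \<and> hp a b r)
           ((\<exists>k. r = 2*k+1 \<and> 0 \<le> y \<and> y < P \<and> k = b) \<or> (\<exists>k. r = 2*k \<and> 0 \<le> y-1 \<and> y - 1 < P \<and> k = a))"
proof -
  have vr: "0 \<le> y" "y \<le> P" "0 \<le> r" "r \<le> 2*Q+1" "y = P \<longrightarrow> r \<le> 2*Q" "y = 0 \<longrightarrow> 1 \<le> r"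
    using assms(3) unfolding vrange_def by auto
  show ?thesis
  proof (cases "even r")
    case True
    then obtain n where n: "r = 2*n" by (auto elim: evenE)
    have h1: "hp a b (r-1) \<longleftrightarrow> a + 1 \<le> n \<and> n \<le> b" unfolding hp_def n by presburger
    have h2: "hp a b r \<longleftrightarrow> n < a \<or> b < n" unfolding hp_def n by presburger
    have h3: "\<not> (\<exists>k. r = 2*k+1 \<and> 0 \<le> y \<and> y < P \<and> k = b)" unfolding n by presburger
    have h4: "(\<exists>k. r = 2*k \<and> 0 \<le> y-1 \<and> y - 1 < P \<and> k = a) \<longleftrightarrow> n = a"
      using vr assms(7) unfolding n by auto
    have g1: "hrange P Q y (r-1) \<and> hp a b (r-1) \<longleftrightarrow> a + 1 \<le> n \<and> n \<le> b"
    proof -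
      have "a + 1 \<le> n \<Longrightarrow> n \<le> b \<Longrightarrow> hrange P Q y (r-1)"
        using n vr assms(1,2,4-8) unfolding hrange_def by presburger
      then show ?thesis unfolding h1 by blast
    qed
    have g2: "hrange P Q y r \<and> hp a b r \<longleftrightarrow> n < a \<or> b < n"
    proof -
      have "n < a \<or> b < n \<Longrightarrow> hrange P Q y r"
        using n vr assms(1,2,4-8) unfolding hrange_def by presburger
      then show ?thesis unfolding h2 by blast
    qed
    show ?thesis unfolding g1 g2 h4 ex1_def using h3 assms(5) by auto
  next
    case False
    then obtain n where n: "r = 2*n+1" by (metis oddE)
    have h1: "hp a b (r-1) \<longleftrightarrow> n < a \<or> b < n" unfolding hp_def n by presburger
    have h2: "hp a b r \<longleftrightarrow> a \<le> n \<and> n < b" unfolding hp_def n by presburger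
    have h3: "(\<exists>k. r = 2*k+1 \<and> 0 \<le> y \<and> y < P \<and> k = b) \<longleftrightarrow> n = b"
      using vr assms(8) unfolding n by auto
    have h4: "\<not> (\<exists>k. r = 2*k \<and> 0 \<le> y-1 \<and> y - 1 < P \<and> k = a)" unfolding n by presburger
    have g1: "hrange P Q y (r-1) \<and> hp a b (r-1) \<longleftrightarrow> n < a \<or> b < n"
    proof -
      have "n < a \<or> b < n \<Longrightarrow> hrange P Q y (r-1)"
        using n vr assms(1,2,4-8) unfolding hrange_def by presburger
      then show ?thesis unfolding h1 by blast
    qed
    have g2: "hrange P Q y r \<and> hp a b r \<longleftrightarrow> a \<le> n \<and> n < b"
    proof -
      have "a \<le> n \<Longrightarrow> n < b \<Longrightarrow> hrange P Q y r"
        using n vr assms(1,2,4-8) unfolding hrange_def by presburger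
      then show ?thesis unfolding h2 by blast
    qed
    show ?thesis unfolding g1 g2 h3 ex1_def using h4 assms(5) by auto
  qed
qed

lemma ex1_unique:
  fixes r :: int
  assumes ex: "ex1 (c1 \<in> M) (c2 \<in> M) ((\<exists>k. r = 2*k+1 \<and> f k \<in> M) \<or> (\<exists>k. r = 2*k \<and> g k \<in> M))"
    and cand: "\<And>e. e \<in> M \<Longrightarrow> v \<in> e \<longleftrightarrow> e = c1 \<or> e = c2 \<or> (\<exists>k. r = 2*k+1 \<and> e = f k) \<or> (\<exists>k. r = 2*k \<and> e = g k)"
    and vin: "v \<in> c1" "v \<in> c2" "\<And>k. r = 2*k+1 \<Longrightarrow> v \<in> f k" "\<And>k. r = 2*k \<Longrightarrow> v \<in> g k"
  shows "\<exists>!e. e \<in> M \<and> v \<in> e"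
proof -
  have par: "\<not> (r = 2*k+1 \<and> r = 2*k')" for k k' :: int by presburger
  have inj1: "r = 2*k+1 \<Longrightarrow> r = 2*k'+1 \<Longrightarrow> k = k'" for k k' :: int by simp
  have inj2: "r = 2*k \<Longrightarrow> r = 2*k' \<Longrightarrow> k = k'" for k k' :: int by simp
  let ?X = "(\<exists>k. r = 2*k+1 \<and> f k \<in> M) \<or> (\<exists>k. r = 2*k \<and> g k \<in> M)"
  consider (c1) "c1 \<in> M" "c2 \<notin> M" "\<not> ?X" | (c2) "c1 \<notin> M" "c2 \<in> M" "\<not> ?X"
    | (c3) "c1 \<notin> M" "c2 \<notin> M" "?X"
    using ex unfolding ex1_def by blast
  then show ?thesis
  proof cases
    case c1
    then show ?thesis using cand vin by (intro ex1I[of _ c1]) auto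
  next
    case c2
    then show ?thesis using cand vin by (intro ex1I[of _ c2]) auto
  next
    case c3
    note a = c3
    from a(3) show ?thesis
    proof (elim disjE exE conjE)
      fix k assume k: "r = 2*k+1" "f k \<in> M"
      show ?thesis
      proof (rule ex1I[of _ "f k"])
        show "f k \<in> M \<and> v \<in> f k" using k vin by auto
        fix e assume e: "e \<in> M \<and> v \<in> e"
        then have "e = c1 \<or> e = c2 \<or> (\<exists>k. r = 2*k+1 \<and> e = f k) \<or> (\<exists>k. r = 2*k \<and> e = g k)"
          using cand[of e] by blast
        then show "e = f k"
        proof (elim disjE exE conjE)
          fix k' assume "r = 2*k'+1" "e = f k'" then show ?thesis using k(1) by simp
        next
          fix k' assume "r = 2*k'" then show ?thesis using k(1) par by blast
        qed (use a e in auto)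
      qed
    next
      fix k assume k: "r = 2*k" "g k \<in> M"
      show ?thesis
      proof (rule ex1I[of _ "g k"])
        show "g k \<in> M \<and> v \<in> g k" using k vin by auto
        fix e assume e: "e \<in> M \<and> v \<in> e"
        then have "e = c1 \<or> e = c2 \<or> (\<exists>k. r = 2*k+1 \<and> e = f k) \<or> (\<exists>k. r = 2*k \<and> e = g k)"
          using cand[of e] by blast
        then show "e = g k"
        proof (elim disjE exE conjE)
          fix k' assume "r = 2*k'" "e = g k'" then show ?thesis using k(1) by simp
        next
          fix k' assume "r = 2*k'+1" then show ?thesis using k(1) par by blast
        qed (use a e in auto)
      qed
    qed
  qed
qed

context
  fixes p q :: nat
  assumes p1: "1 \<le> p" and q1: "1 \<le> q"
begin

lemma Mc_sub:
  assumes "validC p q C" shows "Mc p q C \<subseteq> para_edges p q"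
proof
  fix e assume "e \<in> Mc p q C"
  then have "(\<exists>y r. e = hE y r \<and> hrange (int p) (int q) y r) \<or>
    (\<exists>i k. e = vE i k \<and> 0 \<le> i \<and> i < int p \<and> 0 \<le> k \<and> k \<le> int q)"
    unfolding Mc_def using validC_bounds[OF assms] by blast
  then show "e \<in> para_edges p q" unfolding E_char[OF q1] .
qed

lemma Mc_PM:
  assumes vc: "validC p q C"
  shows "perfect_matching (para_verts p q) (para_edges p q) (Mc p q C)"
  unfolding perfect_matching_def
proof (intro conjI ballI)
  show "Mc p q C \<subseteq> para_edges p q" by (rule Mc_sub[OF vc])
  fix v assume "v \<in> para_verts p q"
  obtain x y where xy: "v = (x, y)" by (cases v)
  define r where "r = x - y + 1"
  have v: "v = (y - 1 + r, y)" unfolding xy r_def by simp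
  have vr: "vrange (int p) (int q) y r" using \<open>v \<in> para_verts p q\<close> V_char[OF p1 q1] unfolding xy r_def by blast
  have ar: "ex1 (hrange (int p) (int q) y (r-1) \<and> hp (C (y-1)) (C y) (r-1)) (hrange (int p) (int q) y r \<and> hp (C (y-1)) (C y) r)
           ((\<exists>k. r = 2*k+1 \<and> 0 \<le> y \<and> y < int p \<and> k = C y) \<or> (\<exists>k. r = 2*k \<and> 0 \<le> y-1 \<and> y - 1 < int p \<and> k = C (y-1)))"
  proof (rule arith_ex1)
    show "1 \<le> int p" "1 \<le> int q" using p1 q1 by auto
    show "vrange (int p) (int q) y r" by fact
    show "0 \<le> C (y - 1)" "C (y - 1) \<le> C y" "C y \<le> int q" using validC_bounds[OF vc] by auto
    show "y \<le> 0 \<longrightarrow> C (y - 1) = 0" "int p \<le> y \<longrightarrow> C y = int q" using vc unfolding validC_def by auto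
  qed
  have ex: "ex1 (hE y (r-1) \<in> Mc p q C) (hE y r \<in> Mc p q C)
     ((\<exists>k. r = 2*k+1 \<and> vE y k \<in> Mc p q C) \<or> (\<exists>k. r = 2*k \<and> vE (y-1) k \<in> Mc p q C))"
    using ar unfolding hE_in_Mc vE_in_Mc by (simp add: conj_commute)
  show "\<exists>!e. e \<in> Mc p q C \<and> v \<in> e"
    unfolding v
  proof (rule ex1_unique[OF ex])
    fix e assume "e \<in> Mc p q C"
    then have "e \<in> para_edges p q" using Mc_sub[OF vc] by blast
    then show "(y - 1 + r, y) \<in> e \<longleftrightarrow> e = hE y (r-1) \<or> e = hE y r \<or>
     (\<exists>k. r = 2*k+1 \<and> e = vE y k) \<or> (\<exists>k. r = 2*k \<and> e = vE (y-1) k)"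
      by (rule v_in_e[OF p1 q1])
  qed (simp_all add: mem_hE mem_vE)
qed

end


lemma upto_ext:
  fixes lo h :: int
  assumes "\<forall>t. lo \<le> t \<and> t \<le> h \<longrightarrow> P t" "P (h+1)"
  shows "\<forall>t. lo \<le> t \<and> t \<le> h+1 \<longrightarrow> P t"
proof (intro allI impI)
  fix t assume "lo \<le> t \<and> t \<le> h + 1"
  then have "t \<le> h \<or> t = h + 1" by arith
  then show "P t" using assms \<open>lo \<le> t \<and> t \<le> h + 1\<close> by auto
qed

lemma upto_ext_s:
  fixes lo h :: int
  assumes "\<forall>t. lo < t \<and> t \<le> h \<longrightarrow> P t" "P (h+1)"
  shows "\<forall>t. lo < t \<and> t \<le> h+1 \<longrightarrow> P t"
proof (intro allI impI)
  fix t assume "lo < t \<and> t \<le> h + 1"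
  then have "t \<le> h \<or> t = h + 1" by arith
  then show "P t" using assms \<open>lo < t \<and> t \<le> h + 1\<close> by auto
qed

lemma suf_lemma:
  fixes s x :: "int \<Rightarrow> bool" and a hi :: int
  assumes s0: "\<not> s (2*a)"
    and vx: "\<And>t. 2*a < t \<Longrightarrow> t \<le> hi \<Longrightarrow> ex1 (s (t-1)) (s t) (x t)"
    and xo: "\<And>t. 2*a < t \<Longrightarrow> t \<le> hi \<Longrightarrow> x t \<Longrightarrow> odd t"
    and hi: "2*a \<le> hi"
  shows "((\<forall>t. 2*a < t \<and> t \<le> hi \<longrightarrow> \<not> x t) \<and> (\<forall>t. 2*a \<le> t \<and> t \<le> hi \<longrightarrow> (s t \<longleftrightarrow> odd t))) \<or>
        (\<exists>u. 2*a < u \<and> u \<le> hi \<and> odd u \<and> (\<forall>t. 2*a < t \<and> t \<le> hi \<longrightarrow> (x t \<longleftrightarrow> t = u)) \<and>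
             (\<forall>t. 2*a \<le> t \<and> t \<le> hi \<longrightarrow> (s t \<longleftrightarrow> (t < u \<and> odd t) \<or> (u < t \<and> even t))))"
proof -
  define IA where "IA h \<longleftrightarrow> (\<forall>t. 2*a < t \<and> t \<le> h \<longrightarrow> \<not> x t) \<and> (\<forall>t. 2*a \<le> t \<and> t \<le> h \<longrightarrow> (s t \<longleftrightarrow> odd t))" for h
  define IB where "IB h u \<longleftrightarrow> 2*a < u \<and> u \<le> h \<and> odd u \<and> (\<forall>t. 2*a < t \<and> t \<le> h \<longrightarrow> (x t \<longleftrightarrow> t = u)) \<and>
             (\<forall>t. 2*a \<le> t \<and> t \<le> h \<longrightarrow> (s t \<longleftrightarrow> (t < u \<and> odd t) \<or> (u < t \<and> even t)))" for h u
  have main: "2*a + int n \<le> hi \<Longrightarrow> IA (2*a + int n) \<or> (\<exists>u. IB (2*a + int n) u)" for n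
  proof (induction n)
    case 0
    have "IA (2*a)" unfolding IA_def using s0 by auto
    then show ?case by simp
  next
    case (Suc n)
    define h where "h = 2*a + int n"
    have hS: "2*a + int (Suc n) = h + 1" unfolding h_def by simp
    have hle: "h + 1 \<le> hi" "2*a \<le> h" using Suc.prems unfolding h_def by auto
    have IH: "IA h \<or> (\<exists>u. IB h u)" using Suc.IH hle unfolding h_def by auto
    have v: "ex1 (s h) (s (h+1)) (x (h+1))" using vx[of "h+1"] hle by simp
    have xo1: "x (h+1) \<Longrightarrow> odd (h+1)" using xo[of "h+1"] hle by simp
    have "IA (h+1) \<or> (\<exists>u. IB (h+1) u)"
    proof (cases "IA h")
      case True
      then have sh: "s h \<longleftrightarrow> odd h" and xh: "\<forall>t. 2*a < t \<and> t \<le> h \<longrightarrow> \<not> x t"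
        and sh': "\<forall>t. 2*a \<le> t \<and> t \<le> h \<longrightarrow> (s t \<longleftrightarrow> odd t)"
        unfolding IA_def using hle by auto
      show ?thesis
      proof (cases "odd h")
        case True
        then have "\<not> s (h+1)" "\<not> x (h+1)" using v sh unfolding ex1_def by auto
        moreover have "\<not> odd (h+1)" using True by simp
        ultimately have "IA (h+1)" unfolding IA_def
          using upto_ext[OF sh'] upto_ext_s[OF xh] by auto
        then show ?thesis by simp
      next
        case False
        then have nsh: "\<not> s h" using sh by simp
        show ?thesis
        proof (cases "x (h+1)")
          case True
          then have ns: "\<not> s (h+1)" using v nsh unfolding ex1_def by auto
          have "IB (h+1) (h+1)" unfolding IB_def
          proof (intro conjI)
            show "2*a < h + 1" "h + 1 \<le> h + 1" using hle by auto
            show "odd (h+1)" using False by simp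
            show "\<forall>t. 2*a < t \<and> t \<le> h+1 \<longrightarrow> (x t \<longleftrightarrow> t = h+1)"
              using upto_ext_s[of "2*a" h "\<lambda>t. x t \<longleftrightarrow> t = h+1"] xh True by auto
            show "\<forall>t. 2*a \<le> t \<and> t \<le> h+1 \<longrightarrow> (s t \<longleftrightarrow> (t < h+1 \<and> odd t) \<or> (h+1 < t \<and> even t))"
              using upto_ext[of "2*a" h "\<lambda>t. s t \<longleftrightarrow> (t < h+1 \<and> odd t) \<or> (h+1 < t \<and> even t)"] sh' ns by auto
          qed
          then show ?thesis by blast
        next
          case xF: False
          then have "s (h+1)" using v nsh unfolding ex1_def by auto
          moreover have "odd (h+1)" using False by simp
          ultimately have "IA (h+1)" unfolding IA_def
            using upto_ext[OF sh'] upto_ext_s[OF xh] xF by auto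
          then show ?thesis by simp
        qed
      qed
    next
      case False
      then obtain u where u: "IB h u" using IH by blast
      then have u1: "2*a < u" "u \<le> h" "odd u" and xh: "\<forall>t. 2*a < t \<and> t \<le> h \<longrightarrow> (x t \<longleftrightarrow> t = u)"
        and sh': "\<forall>t. 2*a \<le> t \<and> t \<le> h \<longrightarrow> (s t \<longleftrightarrow> (t < u \<and> odd t) \<or> (u < t \<and> even t))"
        unfolding IB_def by auto
      have sh: "s h \<longleftrightarrow> (h < u \<and> odd h) \<or> (u < h \<and> even h)" using sh' hle by auto
      have new: "\<not> x (h+1) \<and> (s (h+1) \<longleftrightarrow> (h+1 < u \<and> odd (h+1)) \<or> (u < h+1 \<and> even (h+1)))"
      proof (cases "even (h+1)")
        case True
        then have "\<not> x (h+1)" using xo1 by auto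
        moreover have "\<not> s h" using sh True u1 by auto
        ultimately have "s (h+1)" using v unfolding ex1_def by auto
        then show ?thesis using True u1 \<open>\<not> x (h+1)\<close> by auto
      next
        case False
        then have "even h" by simp
        moreover have "h \<noteq> u" using u1 \<open>even h\<close> by auto
        ultimately have "s h" using sh u1 by auto
        then have "\<not> s (h+1)" "\<not> x (h+1)" using v unfolding ex1_def by auto
        then show ?thesis using False u1 by auto
      qed
      have "IB (h+1) u" unfolding IB_def
      proof (intro conjI)
        show "2*a < u" "u \<le> h + 1" "odd u" using u1 by auto
        show "\<forall>t. 2*a < t \<and> t \<le> h+1 \<longrightarrow> (x t \<longleftrightarrow> t = u)"
          using upto_ext_s[of "2*a" h "\<lambda>t. x t \<longleftrightarrow> t = u"] xh new u1 by auto
        show "\<forall>t. 2*a \<le> t \<and> t \<le> h+1 \<longrightarrow> (s t \<longleftrightarrow> (t < u \<and> odd t) \<or> (u < t \<and> even t))"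
          using upto_ext[of "2*a" h "\<lambda>t. s t \<longleftrightarrow> (t < u \<and> odd t) \<or> (u < t \<and> even t)"] sh' new by auto
      qed
      then show ?thesis by blast
    qed
    then show ?case unfolding hS .
  qed
  have "hi = 2*a + int (nat (hi - 2*a))" using hi by auto
  then have "IA hi \<or> (\<exists>u. IB hi u)" using main[of "nat (hi - 2*a)"] by auto
  then show ?thesis unfolding IA_def IB_def .
qed

lemma pre_lemma:
  fixes s x :: "int \<Rightarrow> bool" and a :: int
  assumes vx: "\<And>t. 0 \<le> t \<Longrightarrow> t \<le> 2*a \<Longrightarrow> ex1 (s (t-1)) (s t) (x t)"
    and sm1: "\<not> s (-1)"
    and xe: "\<And>t. 0 \<le> t \<Longrightarrow> t < 2*a \<Longrightarrow> x t \<Longrightarrow> odd t"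
    and x2a: "x (2*a)"
    and a0: "0 \<le> a"
  shows "(\<forall>t. -1 \<le> t \<and> t < 2*a \<longrightarrow> (s t \<longleftrightarrow> even t) \<and> (0 \<le> t \<longrightarrow> \<not> x t)) \<and> \<not> s (2*a)"
proof -
  define I where "I h \<longleftrightarrow> (\<forall>t. -1 \<le> t \<and> t \<le> h \<longrightarrow> (s t \<longleftrightarrow> even t) \<and> (0 \<le> t \<longrightarrow> \<not> x t))" for h
  have main: "-1 + int n < 2*a \<Longrightarrow> I (-1 + int n)" for n
  proof (induction n)
    case 0
    show ?case unfolding I_def using sm1 by auto
  next
    case (Suc n)
    define h where "h = -1 + int n"
    have hS: "-1 + int (Suc n) = h + 1" unfolding h_def by simp
    have hle: "h + 1 < 2*a" "-1 \<le> h" using Suc.prems unfolding h_def by auto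
    have IH: "I h" using Suc.IH hle unfolding h_def by auto
    then have sh: "s h \<longleftrightarrow> even h" unfolding I_def using hle by auto
    have v: "ex1 (s h) (s (h+1)) (x (h+1))" using vx[of "h+1"] hle by simp
    have new: "(s (h+1) \<longleftrightarrow> even (h+1)) \<and> (0 \<le> h + 1 \<longrightarrow> \<not> x (h+1))"
    proof (cases "even h")
      case True
      then have "\<not> s (h+1)" "\<not> x (h+1)" using v sh unfolding ex1_def by auto
      then show ?thesis using True by auto
    next
      case False
      then have "\<not> x (h+1)" using xe[of "h+1"] hle by auto
      then have "s (h+1)" using v sh False unfolding ex1_def by auto
      then show ?thesis using False \<open>\<not> x (h+1)\<close> by auto
    qed
    have "I (h+1)" using upto_ext[of "-1" h "\<lambda>t. (s t \<longleftrightarrow> even t) \<and> (0 \<le> t \<longrightarrow> \<not> x t)"] IH new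
      unfolding I_def by blast
    then show ?case unfolding hS .
  qed
  have A: "I (2*a - 1)" using main[of "nat (2*a)"] a0 by (simp add: algebra_simps)
  then have "\<not> s (2*a - 1)" unfolding I_def using a0 by auto
  then have "\<not> s (2*a)" using vx[of "2*a"] x2a a0 unfolding ex1_def by auto
  moreover have "\<forall>t. -1 \<le> t \<and> t < 2*a \<longrightarrow> (s t \<longleftrightarrow> even t) \<and> (0 \<le> t \<longrightarrow> \<not> x t)"
    using A unfolding I_def by auto
  ultimately show ?thesis by blast
qed



lemma par1: "2*k \<noteq> 2*ka+(1::int)" by presburger
lemma par2: "2*k+1 \<noteq> 2*(ka::int)" by presburger

lemma hp_even: "hp a b (2*m) \<longleftrightarrow> m < a \<or> b < m"
  unfolding hp_def using par1 by auto
lemma hp_odd: "hp a b (2*m+1) \<longleftrightarrow> a \<le> m \<and> m < b"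
  unfolding hp_def using par2 by auto

lemma hp_low: "r < 2*a \<Longrightarrow> hp a b r \<longleftrightarrow> even r"
proof (cases "even r")
  case True then obtain m where "r = 2*m" by (auto elim: evenE)
  then show "r < 2*a \<Longrightarrow> hp a b r \<longleftrightarrow> even r" using hp_even by auto
next
  case False then obtain m where "r = 2*m+1" by (metis oddE)
  then show "r < 2*a \<Longrightarrow> hp a b r \<longleftrightarrow> even r" using hp_odd by auto
qed

lemma hp_mid: "2*a \<le> r \<Longrightarrow> hp a b r \<longleftrightarrow> (r < 2*b+1 \<and> odd r) \<or> (2*b+1 < r \<and> even r)"
proof (cases "even r")
  case True then obtain m where "r = 2*m" by (auto elim: evenE)
  then show "2*a \<le> r \<Longrightarrow> hp a b r \<longleftrightarrow> (r < 2*b+1 \<and> odd r) \<or> (2*b+1 < r \<and> even r)" using hp_even by auto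
next
  case False then obtain m where "r = 2*m+1" by (metis oddE)
  then show "2*a \<le> r \<Longrightarrow> hp a b r \<longleftrightarrow> (r < 2*b+1 \<and> odd r) \<or> (2*b+1 < r \<and> even r)" using hp_odd by auto
qed

context
  fixes p q :: nat
  assumes p1: "1 \<le> p" and q1: "1 \<le> q"
begin

lemma hE_M:
  assumes pm: "perfect_matching (para_verts p q) (para_edges p q) M" and "hE y r \<in> M"
  shows "hrange (int p) (int q) y r"
proof -
  have "hE y r \<in> para_edges p q" using assms unfolding perfect_matching_def by blast
  then show ?thesis unfolding E_char[OF q1] by auto
qed

lemma vE_M:
  assumes pm: "perfect_matching (para_verts p q) (para_edges p q) M" and "vE i k \<in> M"
  shows "0 \<le> i \<and> i < int p \<and> 0 \<le> k \<and> k \<le> int q"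
proof -
  have "vE i k \<in> para_edges p q" using assms unfolding perfect_matching_def by blast
  then show ?thesis unfolding E_char[OF q1] by auto
qed

lemma level_low:
  assumes pm: "perfect_matching (para_verts p q) (para_edges p q) M"
    and y: "0 \<le> y" "y < int p" and a: "0 \<le> a" "a \<le> int q"
    and down: "\<And>k. vE (y-1) k \<in> M \<longleftrightarrow> (1 \<le> y \<and> k = a)"
    and y0: "y = 0 \<Longrightarrow> a = 0"
  shows "\<exists>b. a \<le> b \<and> b \<le> int q \<and> (\<forall>k. vE y k \<in> M \<longleftrightarrow> k = b) \<and>
           (\<forall>r. hE y r \<in> M \<longleftrightarrow> hrange (int p) (int q) y r \<and> hp a b r)"
proof -
  define s where "s r \<longleftrightarrow> hE y r \<in> M" for r
  define x where "x r \<longleftrightarrow> ext M y r" for r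
  have sr: "s r \<Longrightarrow> hrange (int p) (int q) y r" for r using hE_M[OF pm] unfolding s_def by blast
  have xneg: "t < 0 \<Longrightarrow> \<not> x t" for t
  proof
    assume t: "t < 0" "x t"
    then have "(\<exists>k. t = 2*k+1 \<and> vE y k \<in> M) \<or> (\<exists>k. t = 2*k \<and> vE (y-1) k \<in> M)"
      unfolding x_def ext_def by simp
    then show False
    proof (elim disjE exE conjE)
      fix k assume "t = 2*k+1" "vE y k \<in> M"
      then show False using vE_M[OF pm, of y k] t(1) by linarith
    next
      fix k assume "t = 2*k" "vE (y-1) k \<in> M"
      then show False using vE_M[OF pm, of "y-1" k] t(1) by linarith
    qed
  qed
  have xeven: "x (2*k) \<longleftrightarrow> 1 \<le> y \<and> k = a" for k
    unfolding x_def ext_def using down par1 by auto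
  have xodd: "x (2*k+1) \<longleftrightarrow> vE y k \<in> M" for k
    unfolding x_def ext_def using par2 by auto
  have xe: "x t \<Longrightarrow> t \<noteq> 2*a \<Longrightarrow> odd t" for t
  proof (rule ccontr)
    assume h: "x t" "t \<noteq> 2*a" "\<not> odd t"
    then obtain k where k: "t = 2*k" by (auto elim: evenE)
    then have "k = a" using xeven[of k] h(1) by simp
    then show False using h(2) k by simp
  qed
  have vx: "vrange (int p) (int q) y t \<Longrightarrow> ex1 (s (t-1)) (s t) (x t)" for t
    using PM_vertex[OF p1 q1 pm] unfolding s_def x_def by blast
  have PRE: "\<not> s (2*a) \<and> (\<forall>t. t < 2*a \<longrightarrow> (s t \<longleftrightarrow> hrange (int p) (int q) y t \<and> even t)) \<and>
      (\<forall>t. t < 2*a \<longrightarrow> \<not> x t)"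
  proof (cases "y = 0")
    case True
    then have "a = 0" by (rule y0)
    moreover have "\<not> s 0" using sr[of 0] True unfolding hrange_def by auto
    moreover have "\<forall>t. t < 0 \<longrightarrow> \<not> s t" using sr unfolding hrange_def by force
    moreover have "\<forall>t. t < 0 \<longrightarrow> \<not> hrange (int p) (int q) y t" unfolding hrange_def by auto
    ultimately show ?thesis using xneg by auto
  next
    case False
    then have y1: "1 \<le> y" using y by simp
    have pre: "(\<forall>t. -1 \<le> t \<and> t < 2*a \<longrightarrow> (s t \<longleftrightarrow> even t) \<and> (0 \<le> t \<longrightarrow> \<not> x t)) \<and> \<not> s (2*a)"
    proof (rule pre_lemma)
      show "ex1 (s (t-1)) (s t) (x t)" if "0 \<le> t" "t \<le> 2*a" for t
        using vx[of t] that y y1 a unfolding vrange_def by auto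
      show "\<not> s (-1)" using sr[of "-1"] unfolding hrange_def by auto
      show "x t \<Longrightarrow> odd t" if "0 \<le> t" "t < 2*a" for t using xe[of t] that by auto
      show "x (2*a)" using xeven y1 by auto
      show "0 \<le> a" by fact
    qed
    have hr: "0 \<le> t \<Longrightarrow> t < 2*a \<Longrightarrow> hrange (int p) (int q) y t" for t
      using y1 y a unfolding hrange_def by auto
    have sneg: "s t \<Longrightarrow> 0 \<le> t" for t using sr[of t] unfolding hrange_def by auto
    have hneg: "t < 0 \<Longrightarrow> \<not> hrange (int p) (int q) y t" for t unfolding hrange_def by auto
    show ?thesis
    proof (intro conjI allI impI)
      show "\<not> s (2*a)" using pre by blast
    next
      fix t assume t: "t < 2*a"
      show "s t \<longleftrightarrow> hrange (int p) (int q) y t \<and> even t"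
      proof (cases "t < 0")
        case True then show ?thesis using sneg[of t] hneg[of t] by auto
      next
        case False then show ?thesis using pre hr t by auto
      qed
    next
      fix t assume t: "t < 2*a"
      show "\<not> x t"
      proof (cases "t < 0")
        case True then show ?thesis using xneg by auto
      next
        case False then show ?thesis using pre t by auto
      qed
    qed
  qed
  have SUF: "((\<forall>t. 2*a < t \<and> t \<le> 2*int q+1 \<longrightarrow> \<not> x t) \<and> (\<forall>t. 2*a \<le> t \<and> t \<le> 2*int q+1 \<longrightarrow> (s t \<longleftrightarrow> odd t))) \<or>
        (\<exists>u. 2*a < u \<and> u \<le> 2*int q+1 \<and> odd u \<and> (\<forall>t. 2*a < t \<and> t \<le> 2*int q+1 \<longrightarrow> (x t \<longleftrightarrow> t = u)) \<and>
             (\<forall>t. 2*a \<le> t \<and> t \<le> 2*int q+1 \<longrightarrow> (s t \<longleftrightarrow> (t < u \<and> odd t) \<or> (u < t \<and> even t))))"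
  proof (rule suf_lemma)
    show "\<not> s (2*a)" using PRE by blast
    show "ex1 (s (t-1)) (s t) (x t)" if "2*a < t" "t \<le> 2*int q+1" for t
      using vx[of t] that y a unfolding vrange_def by auto
    show "x t \<Longrightarrow> odd t" if "2*a < t" "t \<le> 2*int q+1" for t using xe[of t] that by auto
    show "2*a \<le> 2*int q+1" using a by auto
  qed
  have nshi: "\<not> s (2*int q+1)" using sr[of "2*int q+1"] unfolding hrange_def by auto
  then obtain u where u: "2*a < u" "u \<le> 2*int q+1" "odd u"
      and xu: "\<forall>t. 2*a < t \<and> t \<le> 2*int q+1 \<longrightarrow> (x t \<longleftrightarrow> t = u)"
      and su: "\<forall>t. 2*a \<le> t \<and> t \<le> 2*int q+1 \<longrightarrow> (s t \<longleftrightarrow> (t < u \<and> odd t) \<or> (u < t \<and> even t))"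
    using SUF a by auto
  obtain b where b: "u = 2*b+1" using u(3) by (metis oddE)
  have ab: "a \<le> b" "b \<le> int q" using u b by auto
  have vb: "vE y k \<in> M \<longleftrightarrow> k = b" for k
  proof
    assume k: "vE y k \<in> M"
    then have "x (2*k+1)" using xodd by simp
    moreover have "k \<le> int q" using vE_M[OF pm k] by simp
    moreover have "\<not> 2*k+1 < 2*a" using PRE \<open>x (2*k+1)\<close> by blast
    moreover have "2*k+1 \<noteq> 2*a" by (rule par2)
    ultimately have "2*a < 2*k+1 \<and> 2*k+1 \<le> 2*int q+1" by arith
    then have "2*k+1 = u" using xu \<open>x (2*k+1)\<close> by blast
    then show "k = b" using b by simp
  next
    assume "k = b"
    moreover have "x u" using xu u by auto
    ultimately show "vE y k \<in> M" using xodd b by simp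
  qed
  have hb: "hE y r \<in> M \<longleftrightarrow> hrange (int p) (int q) y r \<and> hp a b r" for r
  proof (cases "hrange (int p) (int q) y r")
    case False
    then show ?thesis using sr unfolding s_def by blast
  next
    case True
    then have r: "0 \<le> r" "r \<le> 2*int q" unfolding hrange_def by auto
    show ?thesis
    proof (cases "r < 2*a")
      case True
      then show ?thesis using PRE hp_low[OF True] unfolding s_def by auto
    next
      case False
      then have "s r \<longleftrightarrow> (r < u \<and> odd r) \<or> (u < r \<and> even r)" using su r by auto
      moreover have "hp a b r \<longleftrightarrow> (r < u \<and> odd r) \<or> (u < r \<and> even r)"
        using False b hp_mid[of a r b] by auto
      ultimately show ?thesis using \<open>hrange (int p) (int q) y r\<close> unfolding s_def by auto
    qed
  qed
  show ?thesis using ab vb hb by blast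
qed

lemma level_top:
  assumes pm: "perfect_matching (para_verts p q) (para_edges p q) M"
    and a: "0 \<le> a" "a \<le> int q"
    and down: "\<And>k. vE (int p - 1) k \<in> M \<longleftrightarrow> k = a"
  shows "hE (int p) r \<in> M \<longleftrightarrow> hrange (int p) (int q) (int p) r \<and> hp a (int q) r"
proof -
  define y where "y = int p"
  define s where "s r \<longleftrightarrow> hE y r \<in> M" for r
  define x where "x r \<longleftrightarrow> ext M y r" for r
  have y1: "1 \<le> y" using p1 unfolding y_def by simp
  have sr: "s r \<Longrightarrow> hrange (int p) (int q) y r" for r using hE_M[OF pm] unfolding s_def by blast
  have xneg: "t < 0 \<Longrightarrow> \<not> x t" for t
  proof
    assume t: "t < 0" "x t"
    then have "(\<exists>k. t = 2*k+1 \<and> vE y k \<in> M) \<or> (\<exists>k. t = 2*k \<and> vE (y-1) k \<in> M)"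
      unfolding x_def ext_def by simp
    then show False
    proof (elim disjE exE conjE)
      fix k assume "t = 2*k+1" "vE y k \<in> M"
      then show False using vE_M[OF pm, of y k] t(1) by linarith
    next
      fix k assume "t = 2*k" "vE (y-1) k \<in> M"
      then show False using vE_M[OF pm, of "y-1" k] t(1) by linarith
    qed
  qed
  have xeven: "x (2*k) \<longleftrightarrow> k = a" for k
    unfolding x_def ext_def y_def using down par1 by auto
  have xodd: "\<not> x (2*k+1)" for k
    unfolding x_def ext_def using vE_M[OF pm, of y k] par2 unfolding y_def by auto
  have xe: "x t \<Longrightarrow> t = 2*a" for t
  proof (cases "even t")
    case True
    then obtain k where k: "t = 2*k" by (auto elim: evenE)
    then show "x t \<Longrightarrow> t = 2*a" using xeven[of k] by simp
  next
    case False
    then obtain k where k: "t = 2*k+1" by (metis oddE)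
    then show "x t \<Longrightarrow> t = 2*a" using xodd[of k] by simp
  qed
  have vx: "vrange (int p) (int q) y t \<Longrightarrow> ex1 (s (t-1)) (s t) (x t)" for t
    using PM_vertex[OF p1 q1 pm] unfolding s_def x_def by blast
  have pre: "(\<forall>t. -1 \<le> t \<and> t < 2*a \<longrightarrow> (s t \<longleftrightarrow> even t) \<and> (0 \<le> t \<longrightarrow> \<not> x t)) \<and> \<not> s (2*a)"
  proof (rule pre_lemma)
    show "ex1 (s (t-1)) (s t) (x t)" if "0 \<le> t" "t \<le> 2*a" for t
      using vx[of t] that y1 a unfolding vrange_def y_def by auto
    show "\<not> s (-1)" using sr[of "-1"] unfolding hrange_def by auto
    show "x t \<Longrightarrow> odd t" if "0 \<le> t" "t < 2*a" for t using xe[of t] that by auto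
    show "x (2*a)" using xeven by auto
    show "0 \<le> a" by fact
  qed
  have SUF: "((\<forall>t. 2*a < t \<and> t \<le> 2*int q \<longrightarrow> \<not> x t) \<and> (\<forall>t. 2*a \<le> t \<and> t \<le> 2*int q \<longrightarrow> (s t \<longleftrightarrow> odd t))) \<or>
        (\<exists>u. 2*a < u \<and> u \<le> 2*int q \<and> odd u \<and> (\<forall>t. 2*a < t \<and> t \<le> 2*int q \<longrightarrow> (x t \<longleftrightarrow> t = u)) \<and>
             (\<forall>t. 2*a \<le> t \<and> t \<le> 2*int q \<longrightarrow> (s t \<longleftrightarrow> (t < u \<and> odd t) \<or> (u < t \<and> even t))))"
  proof (rule suf_lemma)
    show "\<not> s (2*a)" using pre by blast
    show "ex1 (s (t-1)) (s t) (x t)" if "2*a < t" "t \<le> 2*int q" for t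
      using vx[of t] that y1 a unfolding vrange_def y_def by auto
    show "x t \<Longrightarrow> odd t" if "2*a < t" "t \<le> 2*int q" for t using xe[of t] that by auto
    show "2*a \<le> 2*int q" using a by auto
  qed
  moreover have "\<not> (\<exists>u. 2*a < u \<and> u \<le> 2*int q \<and> odd u \<and> (\<forall>t. 2*a < t \<and> t \<le> 2*int q \<longrightarrow> (x t \<longleftrightarrow> t = u)) \<and>
             (\<forall>t. 2*a \<le> t \<and> t \<le> 2*int q \<longrightarrow> (s t \<longleftrightarrow> (t < u \<and> odd t) \<or> (u < t \<and> even t))))"
  proof
    assume "\<exists>u. 2*a < u \<and> u \<le> 2*int q \<and> odd u \<and> (\<forall>t. 2*a < t \<and> t \<le> 2*int q \<longrightarrow> (x t \<longleftrightarrow> t = u)) \<and>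
             (\<forall>t. 2*a \<le> t \<and> t \<le> 2*int q \<longrightarrow> (s t \<longleftrightarrow> (t < u \<and> odd t) \<or> (u < t \<and> even t)))"
    then obtain u where "2*a < u" "u \<le> 2*int q" "\<forall>t. 2*a < t \<and> t \<le> 2*int q \<longrightarrow> (x t \<longleftrightarrow> t = u)" by blast
    then have "x u" by auto
    then show False using xe[of u] \<open>2*a < u\<close> by simp
  qed
  ultimately have su: "\<forall>t. 2*a \<le> t \<and> t \<le> 2*int q \<longrightarrow> (s t \<longleftrightarrow> odd t)" by blast
  show ?thesis
  proof (cases "hrange (int p) (int q) y r")
    case False
    then show ?thesis using sr unfolding s_def y_def by blast
  next
    case True
    then have r: "0 \<le> r" "r \<le> 2*int q - 1" unfolding hrange_def y_def by auto
    show ?thesis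
    proof (cases "r < 2*a")
      case True
      then show ?thesis using pre hp_low[OF True] r \<open>hrange (int p) (int q) y r\<close> unfolding s_def y_def by auto
    next
      case False
      then have "s r \<longleftrightarrow> odd r" using su r by auto
      moreover have "hp a (int q) r \<longleftrightarrow> odd r"
        using False r hp_mid[of a r "int q"] by auto
      ultimately show ?thesis using \<open>hrange (int p) (int q) y r\<close> unfolding s_def y_def by auto
    qed
  qed
qed

end


context
  fixes p q :: nat
  assumes p1: "1 \<le> p" and q1: "1 \<le> q"
begin

lemma PM_is_Mc:
  assumes pm: "perfect_matching (para_verts p q) (para_edges p q) M"
  shows "\<exists>C. validC p q C \<and> M = Mc p q C"
proof -
  define rp where "rp n = (THE b. \<forall>k. vE (int n) k \<in> M \<longleftrightarrow> k = b)" for n :: nat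
  have rp_eq: "(\<forall>k. vE (int n) k \<in> M \<longleftrightarrow> k = b) \<Longrightarrow> rp n = b" for n b
  proof -
    assume h: "\<forall>k. vE (int n) k \<in> M \<longleftrightarrow> k = b"
    show "rp n = b" unfolding rp_def
    proof (rule the_equality)
      show "\<forall>k. vE (int n) k \<in> M \<longleftrightarrow> k = b" by fact
      fix b' assume "\<forall>k. vE (int n) k \<in> M \<longleftrightarrow> k = b'"
      then show "b' = b" using h by blast
    qed
  qed
  define pv where "pv n = (if n = 0 then 0 else rp (n - 1))" for n :: nat
  have R: "n < p \<Longrightarrow> (\<forall>k. vE (int n) k \<in> M \<longleftrightarrow> k = rp n) \<and> 0 \<le> pv n \<and> pv n \<le> rp n \<and> rp n \<le> int q \<and>
      (\<forall>r. hE (int n) r \<in> M \<longleftrightarrow> hrange (int p) (int q) (int n) r \<and> hp (pv n) (rp n) r)" for n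
  proof (induction n)
    case 0
    have "\<exists>b. 0 \<le> b \<and> b \<le> int q \<and> (\<forall>k. vE 0 k \<in> M \<longleftrightarrow> k = b) \<and>
           (\<forall>r. hE 0 r \<in> M \<longleftrightarrow> hrange (int p) (int q) 0 r \<and> hp 0 b r)"
    proof (rule level_low[OF p1 q1 pm])
      show "vE (0 - 1) k \<in> M \<longleftrightarrow> (1 \<le> (0::int) \<and> k = 0)" for k
        using vE_M[OF p1 q1 pm, of "0 - 1" k] by auto
    qed (use p1 in auto)
    then obtain b where b: "0 \<le> b" "b \<le> int q" "\<forall>k. vE 0 k \<in> M \<longleftrightarrow> k = b"
      "\<forall>r. hE 0 r \<in> M \<longleftrightarrow> hrange (int p) (int q) 0 r \<and> hp 0 b r" by blast
    have "rp 0 = b" using rp_eq[of 0 b] b(3) by simp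
    then show ?case using b unfolding pv_def by simp
  next
    case (Suc n)
    then have IH: "\<forall>k. vE (int n) k \<in> M \<longleftrightarrow> k = rp n" "0 \<le> pv n" "pv n \<le> rp n" "rp n \<le> int q" by auto
    have "\<exists>b. rp n \<le> b \<and> b \<le> int q \<and> (\<forall>k. vE (int (Suc n)) k \<in> M \<longleftrightarrow> k = b) \<and>
           (\<forall>r. hE (int (Suc n)) r \<in> M \<longleftrightarrow> hrange (int p) (int q) (int (Suc n)) r \<and> hp (rp n) b r)"
    proof (rule level_low[OF p1 q1 pm])
      show "vE (int (Suc n) - 1) k \<in> M \<longleftrightarrow> (1 \<le> int (Suc n) \<and> k = rp n)" for k
        using IH(1) by simp
    qed (use Suc.prems IH in auto)
    then obtain b where b: "rp n \<le> b" "b \<le> int q" "\<forall>k. vE (int (Suc n)) k \<in> M \<longleftrightarrow> k = b"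
      "\<forall>r. hE (int (Suc n)) r \<in> M \<longleftrightarrow> hrange (int p) (int q) (int (Suc n)) r \<and> hp (rp n) b r" by blast
    have "rp (Suc n) = b" using rp_eq[of "Suc n" b] b(3) by simp
    then show ?case using b IH unfolding pv_def by simp
  qed
  have rpmono: "m + d < p \<Longrightarrow> rp m \<le> rp (m + d)" for m d
  proof (induction d)
    case 0 then show ?case by simp
  next
    case (Suc d)
    then have "rp m \<le> rp (m + d)" by simp
    moreover have "pv (m + Suc d) \<le> rp (m + Suc d)" using R[of "m + Suc d"] Suc.prems by blast
    ultimately show ?case unfolding pv_def by simp
  qed
  define C where "C i = (if i < 0 then 0 else if int p \<le> i then int q else rp (nat i))" for i
  have Cb: "0 \<le> C i \<and> C i \<le> int q" for i
  proof (cases "i < 0 \<or> int p \<le> i")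
    case True then show ?thesis unfolding C_def by auto
  next
    case False then have "nat i < p" by auto
    then have "0 \<le> pv (nat i)" "pv (nat i) \<le> rp (nat i)" "rp (nat i) \<le> int q" using R[of "nat i"] by auto
    then show ?thesis using False unfolding C_def by auto
  qed
  have vc: "validC p q C" unfolding validC_def
  proof (intro conjI allI impI)
    show "i < 0 \<Longrightarrow> C i = 0" for i unfolding C_def by simp
    show "int p \<le> i \<Longrightarrow> C i = int q" for i unfolding C_def by simp
    fix i j :: int assume ij: "i \<le> j"
    show "C i \<le> C j"
    proof (cases "i < 0 \<or> int p \<le> j")
      case True
      then show ?thesis using Cb[of i] Cb[of j] ij unfolding C_def by auto
    next
      case False
      then have "nat i + (nat j - nat i) < p" "nat i + (nat j - nat i) = nat j" using ij by auto
      then have "rp (nat i) \<le> rp (nat j)" using rpmono[of "nat i" "nat j - nat i"] by simp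
      then show ?thesis using False ij unfolding C_def by auto
    qed
  qed
  have vEq: "vE i k \<in> M \<longleftrightarrow> 0 \<le> i \<and> i < int p \<and> k = C i" for i k
  proof
    assume h: "vE i k \<in> M"
    then have b: "0 \<le> i" "i < int p" using vE_M[OF p1 q1 pm h] by auto
    then have "nat i < p" "int (nat i) = i" by auto
    then have "k = rp (nat i)" using R[of "nat i"] h by auto
    then show "0 \<le> i \<and> i < int p \<and> k = C i" using b unfolding C_def by auto
  next
    assume h: "0 \<le> i \<and> i < int p \<and> k = C i"
    then have "nat i < p" "int (nat i) = i" "k = rp (nat i)" unfolding C_def by auto
    then show "vE i k \<in> M" using R[of "nat i"] by auto
  qed
  have hEq: "hE y r \<in> M \<longleftrightarrow> hrange (int p) (int q) y r \<and> hp (C (y-1)) (C y) r" for y r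
  proof (cases "hrange (int p) (int q) y r")
    case False
    then show ?thesis using hE_M[OF p1 q1 pm] by blast
  next
    case True
    then have y: "0 \<le> y" "y \<le> int p" unfolding hrange_def by auto
    show ?thesis
    proof (cases "y < int p")
      case True
      define n where "n = nat y"
      have n: "n < p" "int n = y" unfolding n_def using True y by auto
      have "pv n = C (y - 1)"
      proof (cases "n = 0")
        case True then show ?thesis using n unfolding pv_def C_def by auto
      next
        case False
        then have "int (n - 1) = y - 1" "n - 1 < p" using n by auto
        then show ?thesis using False n unfolding pv_def C_def by (auto simp: nat_diff_distrib)
      qed
      moreover have "rp n = C y" using n unfolding C_def by auto
      ultimately show ?thesis using R[OF n(1)] n by auto
    next
      case False
      then have yp: "y = int p" using y by auto
      have pn: "p - 1 < p" "int (p - 1) = int p - 1" using p1 by auto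
      have Rp: "\<forall>k. vE (int p - 1) k \<in> M \<longleftrightarrow> k = rp (p - 1)" "0 \<le> rp (p-1)" "rp (p-1) \<le> int q"
        using R[OF pn(1)] pn(2) by auto
      have "hE (int p) r \<in> M \<longleftrightarrow> hrange (int p) (int q) (int p) r \<and> hp (rp (p-1)) (int q) r"
        by (rule level_top[OF p1 q1 pm Rp(2,3)]) (use Rp(1) in blast)
      moreover have "C (y - 1) = rp (p - 1)" "C y = int q" unfolding C_def yp using pn p1
        by (auto simp: nat_diff_distrib)
      ultimately show ?thesis using yp by simp
    qed
  qed
  have "M = Mc p q C"
  proof (intro set_eqI iffI)
    fix e assume e: "e \<in> M"
    then have "e \<in> para_edges p q" using pm unfolding perfect_matching_def by blast
    then have "(\<exists>y r. e = hE y r \<and> hrange (int p) (int q) y r) \<or>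
      (\<exists>i k. e = vE i k \<and> 0 \<le> i \<and> i < int p \<and> 0 \<le> k \<and> k \<le> int q)" unfolding E_char[OF q1] .
    then show "e \<in> Mc p q C"
    proof (elim disjE exE conjE)
      fix y r assume "e = hE y r" then show ?thesis using e hEq hE_in_Mc by auto
    next
      fix i k assume "e = vE i k" then show ?thesis using e vEq vE_in_Mc by auto
    qed
  next
    fix e assume e: "e \<in> Mc p q C"
    then have "(\<exists>y r. e = hE y r \<and> hrange (int p) (int q) y r \<and> hp (C (y-1)) (C y) r) \<or>
      (\<exists>i. e = vE i (C i) \<and> 0 \<le> i \<and> i < int p)" unfolding Mc_def by blast
    then show "e \<in> M" using hEq vEq by auto
  qed
  then show ?thesis using vc by blast
qed

end


definition okstep :: "int \<Rightarrow> int \<Rightarrow> int \<times> int \<Rightarrow> int \<times> int \<Rightarrow> bool" where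
  "okstep P Q u v \<longleftrightarrow>
     (v = (fst u, snd u - 1) \<and> 0 \<le> fst u \<and> fst u < P \<and> 1 \<le> snd u \<and> snd u \<le> Q) \<or>
     (v = (fst u + 1, snd u) \<and> -1 \<le> fst u \<and> fst u < P \<and> 0 \<le> snd u \<and> snd u < Q) \<or>
     (v = (fst u - 1, snd u + 1) \<and> 1 \<le> fst u \<and> fst u < P \<and> 0 \<le> snd u \<and> snd u + 1 < Q)"

definition isUR :: "int \<times> int \<Rightarrow> int \<times> int \<Rightarrow> bool" where
  "isUR u v \<longleftrightarrow> v = (fst u - 1, snd u + 1)"

definition stepT :: "(int \<times> int \<Rightarrow> bool) \<Rightarrow> int \<times> int \<Rightarrow> int \<times> int \<Rightarrow> bool" where
  "stepT X u v \<longleftrightarrow> (if isUR u v then X u = X v else \<not> X u \<and> X v)"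

definition monoX :: "(int \<times> int \<Rightarrow> bool) \<Rightarrow> bool" where
  "monoX X \<longleftrightarrow> (\<forall>i m. (X (i, m) \<longrightarrow> X (i, m - 1)) \<and> (X (i, m) \<longrightarrow> X (i + 1, m)))"

lemma step_rel:
  assumes "okstep P Q u v" "monoX X"
  shows "if isUR u v then (X v \<longrightarrow> X u) else (X u \<longrightarrow> X v)"
proof -
  obtain i m where u: "u = (i, m)" by (cases u)
  have m1: "X (i, m) \<Longrightarrow> X (i, m - 1)" and m2: "X (i, m) \<Longrightarrow> X (i + 1, m)"
    and m3: "X (i - 1, m + 1) \<Longrightarrow> X (i, m)"
  proof -
    show "X (i, m) \<Longrightarrow> X (i, m - 1)" "X (i, m) \<Longrightarrow> X (i + 1, m)" using assms(2) unfolding monoX_def by auto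
    assume "X (i - 1, m + 1)"
    then have "X (i - 1 + 1, m + 1)" using assms(2) unfolding monoX_def by blast
    then have "X (i, m + 1 - 1)" using assms(2) unfolding monoX_def by (metis diff_add_cancel)
    then show "X (i, m)" by simp
  qed
  from assms(1) consider (L) "v = (i, m - 1)" | (D) "v = (i + 1, m)" | (U) "v = (i - 1, m + 1)"
    unfolding okstep_def u by auto
  then show ?thesis
  proof cases
    case L then show ?thesis using m1 unfolding isUR_def u by auto
  next
    case D then show ?thesis using m2 unfolding isUR_def u by auto
  next
    case U then show ?thesis using m3 unfolding isUR_def u by auto
  qed
qed

lemma step_nf:
  assumes "okstep P Q u v" "monoX X" "monoX Y" "X u \<noteq> Y u" "X v \<noteq> Y v"
  shows "X u = X v"
  using step_rel[OF assms(1,2)] step_rel[OF assms(1,3)] assms(4,5) by (cases "isUR u v") auto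

lemma step_entry:
  assumes "okstep P Q u v" "monoX X" "monoX Y" "X u = Y u" "X v \<noteq> Y v" "X v"
  shows "stepT X u v \<and> \<not> stepT Y u v"
  using step_rel[OF assms(1,2)] step_rel[OF assms(1,3)] assms(4-6) unfolding stepT_def
  by (cases "isUR u v") auto

lemma step_exit:
  assumes "okstep P Q u v" "monoX X" "monoX Y" "X u \<noteq> Y u" "\<not> X u" "X v = Y v"
  shows "stepT X u v \<and> \<not> stepT Y u v"
  using step_rel[OF assms(1,2)] step_rel[OF assms(1,3)] assms(4-6) unfolding stepT_def
  by (cases "isUR u v") auto

lemma walk_exit:
  assumes "monoX X" "monoX Y"
  shows "successively (okstep P Q) (u # ws) \<Longrightarrow> X u \<noteq> Y u \<Longrightarrow> \<not> X u \<Longrightarrow>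
    X (last (u # ws)) = Y (last (u # ws)) \<Longrightarrow>
    \<exists>a b. (a, b) \<in> set (zip (u # ws) ws) \<and> stepT X a b \<and> \<not> stepT Y a b"
proof (induction ws arbitrary: u)
  case Nil
  then show ?case by simp
next
  case (Cons v ws)
  have st: "okstep P Q u v" "successively (okstep P Q) (v # ws)" using Cons.prems(1) by auto
  show ?case
  proof (cases "X v = Y v")
    case True
    then have "stepT X u v \<and> \<not> stepT Y u v" using step_exit[OF st(1) assms Cons.prems(2,3)] by blast
    then show ?thesis by (intro exI[of _ u] exI[of _ v]) simp
  next
    case False
    then have "X v = X u" using step_nf[OF st(1) assms Cons.prems(2)] by simp
    then have "\<not> X v" using Cons.prems(3) by simp
    moreover have "X (last (v # ws)) = Y (last (v # ws))" using Cons.prems(4) by simp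
    ultimately obtain a b where "(a, b) \<in> set (zip (v # ws) ws)" "stepT X a b" "\<not> stepT Y a b"
      using Cons.IH[OF st(2) False] by blast
    then show ?thesis by (intro exI[of _ a] exI[of _ b]) simp
  qed
qed

lemma walk_main:
  assumes "monoX X" "monoX Y"
  shows "successively (okstep P Q) (u # ws) \<Longrightarrow> X u = Y u \<Longrightarrow>
    X (last (u # ws)) = Y (last (u # ws)) \<Longrightarrow> (\<exists>w \<in> set (u # ws). X w \<noteq> Y w) \<Longrightarrow>
    \<exists>a b. (a, b) \<in> set (zip (u # ws) ws) \<and> stepT X a b \<and> \<not> stepT Y a b"
proof (induction ws arbitrary: u)
  case Nil
  then show ?case by simp
next
  case (Cons v ws)
  have st: "okstep P Q u v" "successively (okstep P Q) (v # ws)" using Cons.prems(1) by auto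
  show ?case
  proof (cases "X v = Y v")
    case True
    have "\<exists>w \<in> set (v # ws). X w \<noteq> Y w" using Cons.prems(2,4) by auto
    moreover have "X (last (v # ws)) = Y (last (v # ws))" using Cons.prems(3) by simp
    ultimately obtain a b where "(a, b) \<in> set (zip (v # ws) ws)" "stepT X a b" "\<not> stepT Y a b"
      using Cons.IH[OF st(2) True] by blast
    then show ?thesis by (intro exI[of _ a] exI[of _ b]) simp
  next
    case False
    show ?thesis
    proof (cases "X v")
      case True
      then have "stepT X u v \<and> \<not> stepT Y u v" using step_entry[OF st(1) assms Cons.prems(2) False] by blast
      then show ?thesis by (intro exI[of _ u] exI[of _ v]) simp
    next
      case nX: False
      have "X (last (v # ws)) = Y (last (v # ws))" using Cons.prems(3) by simp
      then obtain a b where "(a, b) \<in> set (zip (v # ws) ws)" "stepT X a b" "\<not> stepT Y a b"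
        using walk_exit[OF assms st(2) False nX] by blast
      then show ?thesis by (intro exI[of _ a] exI[of _ b]) simp
    qed
  qed
qed



definition Xc :: "(int \<Rightarrow> int) \<Rightarrow> int \<times> int \<Rightarrow> bool" where
  "Xc C c \<longleftrightarrow> snd c < C (fst c)"

definition stepE :: "int \<times> int \<Rightarrow> int \<times> int \<Rightarrow> vtx set" where
  "stepE u v = (if v = (fst u, snd u - 1) then vE (fst u) (snd u)
     else if v = (fst u + 1, snd u) then hE (fst u + 1) (2 * snd u + 1)
     else hE (fst u) (2 * snd u + 2))"

lemma Xc_mono:
  assumes "validC p q C" shows "monoX (Xc C)"
  unfolding monoX_def Xc_def
proof (intro allI conjI impI)
  fix i m :: int
  show "snd (i, m) < C (fst (i, m)) \<Longrightarrow> snd (i, m - 1) < C (fst (i, m - 1))" by simp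
  show "snd (i, m) < C (fst (i, m)) \<Longrightarrow> snd (i + 1, m) < C (fst (i + 1, m))"
    using validC_bounds(3)[OF assms, of i "i+1"] by simp
qed

lemma stepT_Mc:
  assumes p1: "1 \<le> p" and vc: "validC p q C" and ok: "okstep (int p) (int q) u v"
  shows "stepT (Xc C) u v \<longleftrightarrow> stepE u v \<in> Mc p q C"
proof -
  obtain i m where u: "u = (i, m)" by (cases u)
  from ok consider (L) "v = (i, m - 1)" "0 \<le> i" "i < int p" "1 \<le> m" "m \<le> int q"
    | (D) "v = (i + 1, m)" "-1 \<le> i" "i < int p" "0 \<le> m" "m < int q"
    | (U) "v = (i - 1, m + 1)" "1 \<le> i" "i < int p" "0 \<le> m" "m + 1 < int q"
    unfolding okstep_def u by auto
  then show ?thesis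
  proof cases
    case L
    have "stepE u v = vE i m" unfolding stepE_def u L by simp
    moreover have "\<not> isUR u v" unfolding isUR_def u L by simp
    ultimately show ?thesis unfolding stepT_def Xc_def u L using L(2,3) by (auto simp: vE_in_Mc)
  next
    case D
    have "stepE u v = hE (i + 1) (2 * m + 1)" unfolding stepE_def u D by simp
    moreover have "\<not> isUR u v" unfolding isUR_def u D by simp
    moreover have "hrange (int p) (int q) (i + 1) (2 * m + 1)" unfolding hrange_def using D p1 by auto
    ultimately show ?thesis unfolding stepT_def Xc_def u D by (auto simp: hE_in_Mc hp_odd)
  next
    case U
    have "stepE u v = hE i (2 * m + 2)" unfolding stepE_def u U by simp
    moreover have "isUR u v" unfolding isUR_def u U by simp
    moreover have "hrange (int p) (int q) i (2 * m + 2)" unfolding hrange_def using U by auto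
    moreover have "C (i - 1) \<le> C i" using validC_bounds(3)[OF vc, of "i - 1" i] by simp
    moreover have "hp (C (i - 1)) (C i) (2 * m + 2) \<longleftrightarrow> m + 1 < C (i - 1) \<or> C i < m + 1"
      using hp_even[of "C (i - 1)" "C i" "m + 1"] by (simp add: algebra_simps)
    ultimately show ?thesis unfolding stepT_def Xc_def u U by (auto simp: hE_in_Mc)
  qed
qed

lemma stepE_E:
  assumes p1: "1 \<le> p" and q1: "1 \<le> q" and ok: "okstep (int p) (int q) u v"
  shows "stepE u v \<in> para_edges p q"
proof -
  obtain i m where u: "u = (i, m)" by (cases u)
  from ok consider (L) "v = (i, m - 1)" "0 \<le> i" "i < int p" "1 \<le> m" "m \<le> int q"
    | (D) "v = (i + 1, m)" "-1 \<le> i" "i < int p" "0 \<le> m" "m < int q"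
    | (U) "v = (i - 1, m + 1)" "1 \<le> i" "i < int p" "0 \<le> m" "m + 1 < int q"
    unfolding okstep_def u by auto
  then show ?thesis
  proof cases
    case L
    have "stepE u v = vE i m" unfolding stepE_def u L by simp
    then show ?thesis unfolding E_char[OF q1] using L by auto
  next
    case D
    have "stepE u v = hE (i + 1) (2 * m + 1)" unfolding stepE_def u D by simp
    moreover have "hrange (int p) (int q) (i + 1) (2 * m + 1)" unfolding hrange_def using D p1 by auto
    ultimately show ?thesis unfolding E_char[OF q1] by auto
  next
    case U
    have "stepE u v = hE i (2 * m + 2)" unfolding stepE_def u U by simp
    moreover have "hrange (int p) (int q) i (2 * m + 2)" unfolding hrange_def using U by auto
    ultimately show ?thesis unfolding E_char[OF q1] by auto
  qed
qed

fun rowL :: "int \<Rightarrow> nat \<Rightarrow> (int \<times> int) list" where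
  "rowL r 0 = []"
| "rowL r (Suc m) = (r, int m) # rowL r m"

fun zg :: "int \<Rightarrow> int \<Rightarrow> nat \<Rightarrow> (int \<times> int) list" where
  "zg r k 0 = []"
| "zg r k (Suc n) = (r, k) # (r + 1, k) # zg r (k + 1) n"

lemma rowL_len[simp]: "length (rowL r m) = m" by (induction m) auto
lemma rowL_set: "set (rowL r m) = {(r, int j) | j. j < m}" by (induction m) (auto simp: less_Suc_eq)
lemma rowL_hd: "0 < m \<Longrightarrow> hd (rowL r m) = (r, int m - 1)" by (cases m) auto
lemma rowL_last: "0 < m \<Longrightarrow> last (rowL r m) = (r, 0)"
proof (induction m)
  case 0 then show ?case by simp
next
  case (Suc m) then show ?case by (cases m) auto
qed
lemma rowL_ne: "0 < m \<Longrightarrow> rowL r m \<noteq> []" by (cases m) auto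
lemma rowL_ok: "0 \<le> r \<Longrightarrow> r < P \<Longrightarrow> int m \<le> Q \<Longrightarrow> successively (okstep P Q) (rowL r m)"
proof (induction m)
  case 0 then show ?case by simp
next
  case (Suc m)
  show ?case
  proof (cases m)
    case 0 then show ?thesis by simp
  next
    case (Suc m')
    then have "hd (rowL r m) = (r, int m - 1)" using rowL_hd by simp
    then have "okstep P Q (r, int m) (hd (rowL r m))" unfolding okstep_def using Suc.prems Suc by auto
    then show ?thesis using Suc.IH Suc.prems Suc by (auto simp: successively_Cons)
  qed
qed

lemma zg_len[simp]: "length (zg r k n) = 2 * n" by (induction n arbitrary: k) auto
lemma zg_set: "set (zg r k n) = {(r, k + int j) | j. j < n} \<union> {(r + 1, k + int j) | j. j < n}"
proof (induction n arbitrary: k)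
  case 0 then show ?case by simp
next
  case (Suc n)
  have "set (zg r k (Suc n)) = {(r, k), (r + 1, k)} \<union> {(r, k + 1 + int j) | j. j < n} \<union> {(r + 1, k + 1 + int j) | j. j < n}"
    using Suc.IH[of "k+1"] by auto
  also have "\<dots> = {(r, k + int j) | j. j < Suc n} \<union> {(r + 1, k + int j) | j. j < Suc n}"
  proof (intro set_eqI iffI)
    fix c assume "c \<in> {(r, k), (r + 1, k)} \<union> {(r, k + 1 + int j) | j. j < n} \<union> {(r + 1, k + 1 + int j) | j. j < n}"
    then show "c \<in> {(r, k + int j) | j. j < Suc n} \<union> {(r + 1, k + int j) | j. j < Suc n}"
    proof (elim UnE insertE exE conjE CollectE)
      fix j assume "c = (r, k + 1 + int j)" "j < n"
      then show ?thesis by (intro UnI1 CollectI exI[of _ "Suc j"]) auto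
    next
      fix j assume "c = (r + 1, k + 1 + int j)" "j < n"
      then show ?thesis by (intro UnI2 CollectI exI[of _ "Suc j"]) auto
    qed auto
  next
    fix c assume "c \<in> {(r, k + int j) | j. j < Suc n} \<union> {(r + 1, k + int j) | j. j < Suc n}"
    then show "c \<in> {(r, k), (r + 1, k)} \<union> {(r, k + 1 + int j) | j. j < n} \<union> {(r + 1, k + 1 + int j) | j. j < n}"
    proof (elim UnE exE conjE CollectE)
      fix j assume h: "c = (r, k + int j)" "j < Suc n"
      show ?thesis
      proof (cases j)
        case 0 then show ?thesis using h by simp
      next
        case (Suc j') then show ?thesis using h by (intro UnI1 UnI2 CollectI exI[of _ j']) auto
      qed
    next
      fix j assume h: "c = (r + 1, k + int j)" "j < Suc n"
      show ?thesis
      proof (cases j)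
        case 0 then show ?thesis using h by simp
      next
        case (Suc j') then show ?thesis using h by (intro UnI2 CollectI exI[of _ j']) auto
      qed
    qed
  qed
  finally show ?case .
qed
lemma zg_hd: "0 < n \<Longrightarrow> hd (zg r k n) = (r, k)" by (cases n) auto
lemma zg_ne: "0 < n \<Longrightarrow> zg r k n \<noteq> []" by (cases n) auto
lemma zg_last: "last (zg r k (Suc n)) = (r + 1, k + int n)"
proof (induction n arbitrary: k)
  case 0 then show ?case by simp
next
  case (Suc n)
  have "last (zg r k (Suc (Suc n))) = last (zg r (k + 1) (Suc n))" by simp
  also have "\<dots> = (r + 1, k + int (Suc n))" using Suc.IH[of "k+1"] by simp
  finally show ?case .
qed
lemma zg_ok: "0 \<le> r \<Longrightarrow> r + 1 < P \<Longrightarrow> 0 \<le> k \<Longrightarrow> k + int n \<le> Q \<Longrightarrow> successively (okstep P Q) (zg r k n)"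
proof (induction n arbitrary: k)
  case 0 then show ?case by simp
next
  case (Suc n)
  have s1: "okstep P Q (r, k) (r + 1, k)" unfolding okstep_def using Suc.prems by auto
  show ?case
  proof (cases n)
    case 0 then show ?thesis using s1 by simp
  next
    case (Suc n')
    have "okstep P Q (r + 1, k) (hd (zg r (k + 1) n))" unfolding zg_hd[of n, OF zero_less_Suc[of n', folded Suc]]
      unfolding okstep_def using Suc.prems Suc by auto
    moreover have "successively (okstep P Q) (zg r (k + 1) n)" using Suc.IH[of "k+1"] Suc.prems by simp
    ultimately show ?thesis using s1 zg_ne[of n r "k+1"] Suc by (simp add: successively_Cons)
  qed
qed



fun W :: "bool \<Rightarrow> nat \<Rightarrow> int \<Rightarrow> nat \<Rightarrow> (int \<times> int) list" where
  "W b 0 r q = [(r, if b then int q - 1 else 0)]"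
| "W True (Suc n) r q = rowL r q @ W False n (r + 1) q"
| "W False (Suc 0) r q = []"
| "W False (Suc (Suc n)) r q = zg r 0 q @ W True n (r + 2) q"

definition validW :: "bool \<Rightarrow> nat \<Rightarrow> bool" where
  "validW b n \<longleftrightarrow> (if b then n mod 3 \<noteq> 2 else n mod 3 \<noteq> 1)"

lemma W_props:
  shows "1 \<le> q \<Longrightarrow> validW b n \<Longrightarrow> W b n r q \<noteq> [] \<and> hd (W b n r q) = (r, if b then int q - 1 else 0) \<and>
    fst (last (W b n r q)) = r + int n \<and> length (W b n r q) = n * q + 1 \<and>
    (\<forall>i m. i < n \<longrightarrow> m < q \<longrightarrow> (r + int i, int m) \<in> set (W b n r q)) \<and>
    (0 \<le> r \<longrightarrow> r + int n \<le> P \<longrightarrow> successively (okstep P (int q)) (W b n r q))"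
proof (induction b n r q rule: W.induct)
  case (1 b r q)
  then show ?case by simp
next
  case (2 n r q)
  have q1: "1 \<le> q" using "2.prems" by simp
  have vn: "validW False n" using "2.prems"(2) unfolding validW_def by presburger
  note IH = "2.IH"[OF q1 vn]
  let ?A = "rowL r q" and ?B = "W False n (r + 1) q"
  have An: "?A \<noteq> []" "hd ?A = (r, int q - 1)" "last ?A = (r, 0)"
    using rowL_ne[of q r] rowL_hd[of q r] rowL_last[of q r] q1 by (simp_all add: Suc_le_eq)
  have eq: "W True (Suc n) r q = ?A @ ?B" by simp
  have c1: "W True (Suc n) r q \<noteq> []" using An eq by simp
  have c2: "hd (W True (Suc n) r q) = (r, int q - 1)" using An eq by simp
  have c3: "fst (last (W True (Suc n) r q)) = r + int (Suc n)" using IH eq by simp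
  have c4: "length (W True (Suc n) r q) = Suc n * q + 1" using IH eq by simp
  have c5: "\<forall>i m. i < Suc n \<longrightarrow> m < q \<longrightarrow> (r + int i, int m) \<in> set (W True (Suc n) r q)"
  proof (intro allI impI)
    fix i m assume i: "i < Suc n" and m: "m < q"
    show "(r + int i, int m) \<in> set (W True (Suc n) r q)"
    proof (cases i)
      case 0 then show ?thesis unfolding eq using m rowL_set[of r q] by auto
    next
      case (Suc i')
      then have "(r + 1 + int i', int m) \<in> set ?B" using IH i m by auto
      then show ?thesis unfolding eq using Suc by (simp add: algebra_simps)
    qed
  qed
  have c6: "0 \<le> r \<longrightarrow> r + int (Suc n) \<le> P \<longrightarrow> successively (okstep P (int q)) (W True (Suc n) r q)"
  proof (intro impI)
    assume r: "0 \<le> r" "r + int (Suc n) \<le> P"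
    have "successively (okstep P (int q)) ?A" using rowL_ok[of r P q "int q"] r by auto
    moreover have "successively (okstep P (int q)) ?B" using IH r by auto
    moreover have "okstep P (int q) (last ?A) (hd ?B)" unfolding An(3) using IH r q1
      unfolding okstep_def by auto
    ultimately show "successively (okstep P (int q)) (W True (Suc n) r q)"
      unfolding eq successively_append_iff by blast
  qed
  show ?case by (simp only: if_True if_False) (intro conjI c1 c2 c3 c4 c5 c6)
next
  case (3 r q)
  then show ?case unfolding validW_def by simp
next
  case (4 n r q)
  have q1: "1 \<le> q" using "4.prems" by simp
  have vn: "validW True n" using "4.prems"(2) unfolding validW_def by presburger
  note IH = "4.IH"[OF q1 vn]
  let ?A = "zg r 0 q" and ?B = "W True n (r + 2) q"
  obtain q' where q': "q = Suc q'" using q1 by (cases q) auto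
  have An: "?A \<noteq> []" "hd ?A = (r, 0)" "last ?A = (r + 1, int q - 1)"
    using zg_ne[of q r 0] zg_hd[of q r 0] zg_last[of r 0 q'] q' by simp_all
  have eq: "W False (Suc (Suc n)) r q = ?A @ ?B" by simp
  have c1: "W False (Suc (Suc n)) r q \<noteq> []" using An eq by simp
  have c2: "hd (W False (Suc (Suc n)) r q) = (r, 0)" using An eq by simp
  have c3: "fst (last (W False (Suc (Suc n)) r q)) = r + int (Suc (Suc n))" using IH eq by simp
  have c4: "length (W False (Suc (Suc n)) r q) = Suc (Suc n) * q + 1" using IH eq by simp
  have c5: "\<forall>i m. i < Suc (Suc n) \<longrightarrow> m < q \<longrightarrow> (r + int i, int m) \<in> set (W False (Suc (Suc n)) r q)"
  proof (intro allI impI)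
    fix i m assume i: "i < Suc (Suc n)" and m: "m < q"
    have zs: "set ?A = {(r, 0 + int j) | j. j < q} \<union> {(r + 1, 0 + int j) | j. j < q}" by (rule zg_set)
    show "(r + int i, int m) \<in> set (W False (Suc (Suc n)) r q)"
    proof (cases "i < 2")
      case True
      then have "i = 0 \<or> i = 1" by auto
      then show ?thesis unfolding eq using m zs by auto
    next
      case False
      define i' where "i' = i - 2"
      have i': "i = Suc (Suc i')" using False unfolding i'_def by simp
      then have "(r + 2 + int i', int m) \<in> set ?B" using IH i m by auto
      then show ?thesis unfolding eq using i' by (simp add: algebra_simps)
    qed
  qed
  have c6: "0 \<le> r \<longrightarrow> r + int (Suc (Suc n)) \<le> P \<longrightarrow> successively (okstep P (int q)) (W False (Suc (Suc n)) r q)"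
  proof (intro impI)
    assume r: "0 \<le> r" "r + int (Suc (Suc n)) \<le> P"
    have "successively (okstep P (int q)) ?A" using zg_ok[of r P 0 q "int q"] r by auto
    moreover have "successively (okstep P (int q)) ?B" using IH r by auto
    moreover have "okstep P (int q) (last ?A) (hd ?B)" unfolding An(3) using IH r q1
      unfolding okstep_def by auto
    ultimately show "successively (okstep P (int q)) (W False (Suc (Suc n)) r q)"
      unfolding eq successively_append_iff by blast
  qed
  show ?case by (simp only: if_True if_False) (intro conjI c1 c2 c3 c4 c5 c6)
qed

definition wk :: "nat \<Rightarrow> nat \<Rightarrow> (int \<times> int) list" where
  "wk p q = (-1, if p mod 3 \<noteq> 2 then int q - 1 else 0) # W (p mod 3 \<noteq> 2) p 0 q"

lemma wk_props:
  assumes p1: "1 \<le> p" and q1: "1 \<le> q"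
  shows "successively (okstep (int p) (int q)) (wk p q)"
    "hd (wk p q) = (-1, if p mod 3 \<noteq> 2 then int q - 1 else 0)"
    "fst (last (wk p q)) = int p"
    "length (wk p q) = p * q + 2"
    "\<And>i m. 0 \<le> i \<Longrightarrow> i < int p \<Longrightarrow> 0 \<le> m \<Longrightarrow> m < int q \<Longrightarrow> (i, m) \<in> set (wk p q)"
proof -
  define b where "b = (p mod 3 \<noteq> 2)"
  have vb: "validW b p" unfolding validW_def b_def by presburger
  note Wp = W_props[OF q1 vb, of 0 "int p"]
  have wkeq: "wk p q = (-1, if b then int q - 1 else 0) # W b p 0 q" unfolding wk_def b_def by simp
  have st: "okstep (int p) (int q) (-1, if b then int q - 1 else 0) (hd (W b p 0 q))"
    using Wp p1 q1 unfolding okstep_def by auto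
  show "successively (okstep (int p) (int q)) (wk p q)" unfolding wkeq
    using Wp st by (simp add: successively_Cons)
  show "hd (wk p q) = (-1, if p mod 3 \<noteq> 2 then int q - 1 else 0)" unfolding wk_def by simp
  show "fst (last (wk p q)) = int p" unfolding wkeq using Wp by simp
  show "length (wk p q) = p * q + 2" unfolding wkeq using Wp by simp
  fix i m :: int assume h: "0 \<le> i" "i < int p" "0 \<le> m" "m < int q"
  then have "nat i < p" "nat m < q" by auto
  then have "(0 + int (nat i), int (nat m)) \<in> set (W b p 0 q)" using Wp by blast
  then show "(i, m) \<in> set (wk p q)" unfolding wkeq using h by simp
qed

lemma succ_zip: "successively P xs \<Longrightarrow> (a, b) \<in> set (zip xs (tl xs)) \<Longrightarrow> P a b"
proof (induction xs rule: induct_list012)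
  case 1 then show ?case by simp
next
  case (2 x) then show ?case by simp
next
  case (3 x y zs)
  then show ?case by auto
qed

lemma diff_cell:
  assumes vc: "validC p q C" and vc': "validC p q C'" and ne: "C \<noteq> C'"
  shows "\<exists>i m. 0 \<le> i \<and> i < int p \<and> 0 \<le> m \<and> m < int q \<and> Xc C (i, m) \<noteq> Xc C' (i, m)"
proof -
  obtain i where i: "C i \<noteq> C' i" using ne by blast
  have ir: "0 \<le> i" "i < int p" using i vc vc' unfolding validC_def by (metis not_less)+
  define m where "m = min (C i) (C' i)"
  have "0 \<le> m" "m < int q" unfolding m_def using validC_bounds[OF vc, of i] validC_bounds[OF vc', of i] i by auto
  moreover have "Xc C (i, m) \<noteq> Xc C' (i, m)" unfolding Xc_def m_def using i by auto
  ultimately show ?thesis using ir by blast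
qed

lemma upper:
  assumes p1: "1 \<le> p" and q1: "1 \<le> q"
  shows "\<exists>S. complete_forcing_set (para_verts p q) (para_edges p q) S \<and> finite S \<and> card S \<le> p * q + 1"
proof -
  define ws where "ws = wk p q"
  define S where "S = (\<lambda>(u, v). stepE u v) ` set (zip ws (tl ws))"
  have okz: "(a, b) \<in> set (zip ws (tl ws)) \<Longrightarrow> okstep (int p) (int q) a b" for a b
    unfolding ws_def by (rule succ_zip[OF wk_props(1)[OF p1 q1]])
  have fin: "finite S" unfolding S_def by simp
  have card: "card S \<le> p * q + 1"
  proof -
    have "card S \<le> card (set (zip ws (tl ws)))" unfolding S_def by (rule card_image_le) simp
    also have "\<dots> \<le> length (zip ws (tl ws))" by (rule card_length)
    also have "\<dots> = p * q + 1" using wk_props(4)[OF p1 q1] unfolding ws_def by simp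
    finally show ?thesis .
  qed
  have SE: "S \<subseteq> para_edges p q" unfolding S_def
  proof (rule image_subsetI)
    fix x assume x: "x \<in> set (zip ws (tl ws))"
    obtain a b where ab: "x = (a, b)" by (cases x)
    have "stepE a b \<in> para_edges p q" using okz x ab stepE_E[OF p1 q1] by blast
    then show "(\<lambda>(u, v). stepE u v) x \<in> para_edges p q" using ab by simp
  qed
  have cfs: "complete_forcing_set (para_verts p q) (para_edges p q) S"
    unfolding complete_forcing_set_def
  proof (intro conjI allI impI)
    show "S \<subseteq> para_edges p q" by (rule SE)
    fix M assume pm: "perfect_matching (para_verts p q) (para_edges p q) M"
    obtain C where C: "validC p q C" "M = Mc p q C" using PM_is_Mc[OF p1 q1 pm] by blast
    show "forcing_set (para_verts p q) (para_edges p q) M (S \<inter> M)"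
      unfolding forcing_set_def
    proof (intro conjI allI impI)
      show "S \<inter> M \<subseteq> M" by blast
      fix M' assume h: "perfect_matching (para_verts p q) (para_edges p q) M' \<and> S \<inter> M \<subseteq> M'"
      obtain C' where C': "validC p q C'" "M' = Mc p q C'" using PM_is_Mc[OF p1 q1] h by blast
      show "M' = M"
      proof (rule ccontr)
        assume "M' \<noteq> M"
        then have "C \<noteq> C'" using C C' by auto
        then obtain i m where im: "0 \<le> i" "i < int p" "0 \<le> m" "m < int q" "Xc C (i, m) \<noteq> Xc C' (i, m)"
          using diff_cell[OF C(1) C'(1)] by blast
        obtain w0 rest where wsr: "ws = w0 # rest" unfolding ws_def wk_def by simp
        have "\<exists>a b. (a, b) \<in> set (zip (w0 # rest) rest) \<and> stepT (Xc C) a b \<and> \<not> stepT (Xc C') a b"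
        proof (rule walk_main[OF Xc_mono[OF C(1)] Xc_mono[OF C'(1)]])
          show "successively (okstep (int p) (int q)) (w0 # rest)" using wk_props(1)[OF p1 q1] wsr ws_def by simp
          have "w0 = (-1, if p mod 3 \<noteq> 2 then int q - 1 else 0)" using wk_props(2)[OF p1 q1] wsr ws_def by simp
          moreover have "C (-1) = 0" "C' (-1) = 0" using C(1) C'(1) unfolding validC_def by auto
          ultimately show "Xc C w0 = Xc C' w0" unfolding Xc_def by simp
          have "fst (last (w0 # rest)) = int p" using wk_props(3)[OF p1 q1] wsr ws_def by simp
          moreover have "C (int p) = int q" "C' (int p) = int q" using C(1) C'(1) unfolding validC_def by auto
          ultimately show "Xc C (last (w0 # rest)) = Xc C' (last (w0 # rest))"
            unfolding Xc_def by simp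
          have "(i, m) \<in> set (w0 # rest)" using wk_props(5)[OF p1 q1 im(1-4)] wsr ws_def by simp
          then show "\<exists>w \<in> set (w0 # rest). Xc C w \<noteq> Xc C' w" using im(5) by blast
        qed
        moreover have "set (zip (w0 # rest) rest) = set (zip ws (tl ws))" using wsr by simp
        ultimately obtain a b where ab: "(a, b) \<in> set (zip ws (tl ws))" "stepT (Xc C) a b" "\<not> stepT (Xc C') a b"
          by auto
        have ok: "okstep (int p) (int q) a b" by (rule okz[OF ab(1)])
        have "stepE a b \<in> M" using stepT_Mc[OF p1 C(1) ok] ab(2) C(2) by simp
        moreover have "stepE a b \<in> S" unfolding S_def by (rule image_eqI[OF _ ab(1)]) simp
        moreover have "stepE a b \<notin> M'" using stepT_Mc[OF p1 C'(1) ok] ab(3) C'(2) by simp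
        ultimately show False using h by blast
      qed
    qed
  qed
  show ?thesis using cfs fin card by blast
qed



definition Cp :: "nat \<Rightarrow> nat \<Rightarrow> int \<Rightarrow> int \<Rightarrow> int \<Rightarrow> int \<Rightarrow> int" where
  "Cp p q i j t k = (if k < 0 then 0 else if int p \<le> k then int q else if k < i then j else if k = i then j + t else j + 1)"

definition C0 :: "nat \<Rightarrow> nat \<Rightarrow> int \<Rightarrow> int" where
  "C0 p q k = (if k < int p then 0 else int q)"
definition C1 :: "nat \<Rightarrow> nat \<Rightarrow> int \<Rightarrow> int" where
  "C1 p q k = (if k < 0 then 0 else int q)"

definition Tset :: "int \<Rightarrow> int \<Rightarrow> vtx set set" where
  "Tset i j = {vE i (j+1), hE i (2*j+1), hE (i+1) (2*j)}"

lemma Cp_valid: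
  assumes "0 \<le> i" "i < int p" "0 \<le> j" "j < int q" "0 \<le> t" "t \<le> 1"
  shows "validC p q (Cp p q i j t)"
  unfolding validC_def
proof (intro conjI allI impI)
  show "k < 0 \<Longrightarrow> Cp p q i j t k = 0" for k unfolding Cp_def by simp
  show "int p \<le> k \<Longrightarrow> Cp p q i j t k = int q" for k unfolding Cp_def by simp
  fix k k' :: int assume "k \<le> k'"
  then show "Cp p q i j t k \<le> Cp p q i j t k'" using assms unfolding Cp_def by auto
qed

lemma C0_valid: "validC p q (C0 p q)" unfolding validC_def C0_def by auto
lemma C1_valid: "validC p q (C1 p q)" unfolding validC_def C1_def by auto

lemma hp_diff1: "hp a (j+1) r \<Longrightarrow> \<not> hp a j r \<Longrightarrow> r = 2*j+1"
proof (cases "even r")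
  case True then obtain m where "r = 2*m" by (auto elim: evenE)
  then show "hp a (j+1) r \<Longrightarrow> \<not> hp a j r \<Longrightarrow> r = 2*j+1" using hp_even by auto
next
  case False then obtain m where "r = 2*m+1" by (metis oddE)
  then show "hp a (j+1) r \<Longrightarrow> \<not> hp a j r \<Longrightarrow> r = 2*j+1" using hp_odd by auto
qed

lemma hp_diff2: "hp (j+1) b r \<Longrightarrow> \<not> hp j b r \<Longrightarrow> r = 2*j"
proof (cases "even r")
  case True then obtain m where "r = 2*m" by (auto elim: evenE)
  then show "hp (j+1) b r \<Longrightarrow> \<not> hp j b r \<Longrightarrow> r = 2*j" using hp_even by auto
next
  case False then obtain m where "r = 2*m+1" by (metis oddE)
  then show "hp (j+1) b r \<Longrightarrow> \<not> hp j b r \<Longrightarrow> r = 2*j" using hp_odd by auto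
qed

lemma D_sub_T:
  assumes ij: "0 \<le> i" "i < int p" "0 \<le> j" "j < int q"
    and e1: "e \<in> Mc p q (Cp p q i j 1)" and e0: "e \<notin> Mc p q (Cp p q i j 0)"
  shows "e \<in> Tset i j"
proof -
  let ?A = "Cp p q i j 1" and ?B = "Cp p q i j 0"
  have same: "k \<noteq> i \<Longrightarrow> ?A k = ?B k" for k unfolding Cp_def by simp
  have Ai: "?A i = j + 1" "?B i = j" unfolding Cp_def using ij by auto
  from e1 have "(\<exists>y r. e = hE y r \<and> hrange (int p) (int q) y r \<and> hp (?A (y-1)) (?A y) r) \<or>
      (\<exists>k. e = vE k (?A k) \<and> 0 \<le> k \<and> k < int p)" unfolding Mc_def by blast
  then show ?thesis
  proof (elim disjE exE conjE)
    fix k assume e: "e = vE k (?A k)" and k: "0 \<le> k" "k < int p"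
    have "?A k \<noteq> ?B k" using e0 e k by (auto simp: vE_in_Mc)
    then have "k = i" using same by blast
    then show ?thesis unfolding Tset_def e using Ai by simp
  next
    fix y r assume e: "e = hE y r" and hr: "hrange (int p) (int q) y r" and h1: "hp (?A (y-1)) (?A y) r"
    have h0: "\<not> hp (?B (y-1)) (?B y) r" using e0 hr unfolding e hE_in_Mc by simp
    consider "y = i" | "y = i + 1" | "y \<noteq> i" "y - 1 \<noteq> i" by arith
    then show ?thesis
    proof cases
      case 1
      have "?A (y - 1) = ?B (y - 1)" using same 1 by simp
      then have "r = 2*j+1" using hp_diff1[of "?B (y-1)" j r] h1 h0 1 Ai by simp
      then show ?thesis unfolding Tset_def e using 1 by simp
    next
      case 2
      have "?A y = ?B y" using same 2 by simp
      then have "r = 2*j" using hp_diff2[of j "?B y" r] h1 h0 2 Ai by simp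
      then show ?thesis unfolding Tset_def e using 2 by simp
    next
      case 3
      then have "?A (y - 1) = ?B (y - 1)" "?A y = ?B y" using same by auto
      then show ?thesis using h1 h0 by simp
    qed
  qed
qed

lemma T_disj:
  assumes "e \<in> Tset i j" "e \<in> Tset i' j'"
  shows "i = i' \<and> j = j'"
proof -
  have p: "2*j+1 \<noteq> 2*j'" "2*j' + 1 \<noteq> 2*j" using par2 by auto
  show ?thesis using assms p unfolding Tset_def by auto
qed

lemma D0_disj:
  assumes ij: "0 \<le> i" "i < int p" "0 \<le> j" "j < int q"
    and e: "e \<in> Tset i j" "e \<in> Mc p q (C0 p q)"
  shows "e \<in> Mc p q (C1 p q)"
proof -
  from e(1) consider "e = vE i (j+1)" | "e = hE i (2*j+1)" | "e = hE (i+1) (2*j)" unfolding Tset_def by auto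
  then show ?thesis
  proof cases
    case 1 then show ?thesis using e(2) ij by (auto simp: vE_in_Mc C0_def)
  next
    case 2
    have "hp (C0 p q (i-1)) (C0 p q i) (2*j+1)" using e(2) unfolding 2 hE_in_Mc by simp
    then show ?thesis using ij unfolding hp_odd C0_def by auto
  next
    case 3
    have "hrange (int p) (int q) (i+1) (2*j)" unfolding hrange_def using ij by auto
    moreover have "hp (C1 p q (i + 1 - 1)) (C1 p q (i+1)) (2*j)" unfolding hp_even C1_def using ij by auto
    ultimately show ?thesis unfolding 3 hE_in_Mc by simp
  qed
qed

lemma sepS:
  assumes p1: "1 \<le> p" and q1: "1 \<le> q"
    and cfs: "complete_forcing_set (para_verts p q) (para_edges p q) S"
    and vc: "validC p q C" and vc': "validC p q C'"
    and ex: "e0 \<in> Mc p q C" "e0 \<notin> Mc p q C'"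
  shows "\<exists>e\<in>S. e \<in> Mc p q C \<and> e \<notin> Mc p q C'"
proof (rule ccontr)
  assume h: "\<not> (\<exists>e\<in>S. e \<in> Mc p q C \<and> e \<notin> Mc p q C')"
  have pm: "perfect_matching (para_verts p q) (para_edges p q) (Mc p q C)" by (rule Mc_PM[OF p1 q1 vc])
  have pm': "perfect_matching (para_verts p q) (para_edges p q) (Mc p q C')" by (rule Mc_PM[OF p1 q1 vc'])
  have "forcing_set (para_verts p q) (para_edges p q) (Mc p q C) (S \<inter> Mc p q C)"
    using cfs pm unfolding complete_forcing_set_def by blast
  moreover have "S \<inter> Mc p q C \<subseteq> Mc p q C'" using h by blast
  ultimately have "Mc p q C' = Mc p q C" using pm' unfolding forcing_set_def by blast
  then show False using ex by blast
qed

lemma lower: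
  assumes p1: "1 \<le> p" and q1: "1 \<le> q"
    and cfs: "complete_forcing_set (para_verts p q) (para_edges p q) S" and fin: "finite S"
  shows "p * q + 1 \<le> card S"
proof -
  define Ii where "Ii = Some ` ({..<p} \<times> {..<q})"
  define I where "I = insert None Ii"
  define PC where "PC x = (case x of None \<Rightarrow> (C0 p q, C1 p q)
      | Some (i, j) \<Rightarrow> (Cp p q (int i) (int j) 1, Cp p q (int i) (int j) 0))" for x
  define h where "h x = (SOME e. e \<in> S \<and> e \<in> Mc p q (fst (PC x)) \<and> e \<notin> Mc p q (snd (PC x)))" for x
  have hx: "h x \<in> S \<and> h x \<in> Mc p q (fst (PC x)) \<and> h x \<notin> Mc p q (snd (PC x))" if x: "x \<in> I" for x
  proof -
    have "\<exists>e. e \<in> S \<and> e \<in> Mc p q (fst (PC x)) \<and> e \<notin> Mc p q (snd (PC x))"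
    proof (cases x)
      case None
      have "vE 0 0 \<in> Mc p q (C0 p q)" "vE 0 0 \<notin> Mc p q (C1 p q)"
        using p1 q1 by (auto simp: vE_in_Mc C0_def C1_def)
      then show ?thesis using sepS[OF p1 q1 cfs C0_valid C1_valid] None unfolding PC_def by auto
    next
      case (Some ij)
      then obtain i j where ij: "x = Some (i, j)" "i < p" "j < q" using x unfolding I_def Ii_def by auto
      have v1: "validC p q (Cp p q (int i) (int j) 1)" by (rule Cp_valid) (use ij in auto)
      have v0: "validC p q (Cp p q (int i) (int j) 0)" by (rule Cp_valid) (use ij in auto)
      have "vE (int i) (int j + 1) \<in> Mc p q (Cp p q (int i) (int j) 1)"
        "vE (int i) (int j + 1) \<notin> Mc p q (Cp p q (int i) (int j) 0)"
        using ij by (auto simp: vE_in_Mc Cp_def)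
      then show ?thesis using sepS[OF p1 q1 cfs v1 v0] ij(1) unfolding PC_def by auto
    qed
    then show ?thesis unfolding h_def by (rule someI_ex)
  qed
  have inj: "inj_on h I"
  proof (rule inj_onI)
    fix x y assume x: "x \<in> I" and y: "y \<in> I" and eq: "h x = h y"
    have memT: "h z \<in> Tset (int i) (int j)" if "z = Some (i, j)" "z \<in> I" for z i j
    proof -
      have ij: "i < p" "j < q" using that unfolding I_def Ii_def by auto
      show ?thesis using D_sub_T[of "int i" p "int j" q "h z"] hx[OF that(2)] ij that(1)
        unfolding PC_def by auto
    qed
    show "x = y"
    proof (cases x)
      case None
      show ?thesis
      proof (cases y)
        case None then show ?thesis using \<open>x = None\<close> by simp
      next
        case (Some ij)
        then obtain i j where yy: "y = Some (i, j)" by (cases ij) auto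
        then have ij: "i < p" "j < q" using y unfolding I_def Ii_def by auto
        have "h y \<in> Tset (int i) (int j)" using memT[OF yy y] .
        moreover have "h y \<in> Mc p q (C0 p q)" "h y \<notin> Mc p q (C1 p q)"
          using hx[OF x] eq None unfolding PC_def by auto
        ultimately show ?thesis using D0_disj[of "int i" p "int j" q "h y"] ij by auto
      qed
    next
      case (Some ij)
      then obtain i j where xx: "x = Some (i, j)" by (cases ij) auto
      then have ij: "i < p" "j < q" using x unfolding I_def Ii_def by auto
      show ?thesis
      proof (cases y)
        case None
        have "h x \<in> Tset (int i) (int j)" using memT[OF xx x] .
        moreover have "h x \<in> Mc p q (C0 p q)" "h x \<notin> Mc p q (C1 p q)"
          using hx[OF y] eq None unfolding PC_def by auto
        ultimately show ?thesis using D0_disj[of "int i" p "int j" q "h x"] ij by auto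
      next
        case (Some ij')
        then obtain i' j' where yy: "y = Some (i', j')" by (cases ij') auto
        have "h x \<in> Tset (int i) (int j)" using memT[OF xx x] .
        moreover have "h x \<in> Tset (int i') (int j')" using memT[OF yy y] eq by simp
        ultimately have "int i = int i' \<and> int j = int j'" by (rule T_disj)
        then show ?thesis using xx yy by simp
      qed
    qed
  qed
  have sub: "h ` I \<subseteq> S" using hx by blast
  have cI: "card I = p * q + 1"
  proof -
    have "card Ii = p * q" unfolding Ii_def by (simp add: card_image card_cartesian_product)
    moreover have "None \<notin> Ii" "finite Ii" unfolding Ii_def by auto
    ultimately show ?thesis unfolding I_def by simp
  qed
  have "card I \<le> card S" using card_inj_on_le[OF inj sub fin] .
  then show ?thesis using cI by simp
qed

theorem mainTheorem8:
  fixes p q :: nat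
  assumes "p \<ge> 1" and "q \<ge> 1"
  shows "cf (para_verts p q) (para_edges p q) = p * q + 1"
proof -
  obtain S where S: "complete_forcing_set (para_verts p q) (para_edges p q) S" "finite S" "card S \<le> p * q + 1"
    using upper[OF assms] by blast
  have "p * q + 1 \<le> card S" by (rule lower[OF assms S(1,2)])
  then have cS: "card S = p * q + 1" using S(3) by simp
  show ?thesis unfolding cf_def
  proof (rule Least_equality)
    show "\<exists>S. complete_forcing_set (para_verts p q) (para_edges p q) S \<and> finite S \<and> card S = p * q + 1"
      using S cS by blast
    fix k assume "\<exists>S. complete_forcing_set (para_verts p q) (para_edges p q) S \<and> finite S \<and> card S = k"
    then show "p * q + 1 \<le> k" using lower[OF assms] by blast
  qed
qed

end
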